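(* Let $\sigma>0$, let $f:[0,\sigma]\to[0,\infty)$ be an excursion function, and let $N$ and $(s_i,i\le N)$ be the random number and times of the backward identification construction described in the context. Then for each $n\ge0$ and $0<t_1<\dots<t_n<\sigma$, \begin{align*} &\mathbb{P}[N=n,\ s_i\in dt_i\ \forall i\le n]=\prod_{k=1}^n\Big(\sum_{i=1}^k\big(f(t_i)-\hat f(t_{i-1},t_i)\big)\Big)\\ &\qquad\times\exp\Big(-\int_0^\sigma\Big(f(t)-\hat f(t_{I(t)},t)+\sum_{i=1}^{I(t)}\big(f(t_i)-\hat f(t_{i-1},t_i)\big)\Big)dt\Big)\,dt_1\cdots dt_n, \end{align*} where $t_0=0$ and $I(t)=\max\{i:t_i<t\}$ for $t\in[0,\sigma]$.
   Context: An excursion function is a continuous $f:[0,\sigma]\to[0,\infty)$ with $f(x)=0$ iff $x\in\{0,\sigma\}$; $\hat f(x,y)=\min\{f(s):s$ between $x$ and $y\}$. The tree $\mathcal T_f=[0,\sigma]/\{d_f=0\}$, $d_f(x,y)=f(x)+f(y)-2\hat f(x,y)$, has projection $p_f$ and root $\rho=p_f(0)$. Construction: $s_1$ is the first point of a Poisson process on $[0,\sigma]$ with intensity $f(t)dt$ (if none, $N=0$), $x_1=p_f(s_1)$. Given $s_1,\dots,s_i$ (and $s_0=0$), for $t\in[s_i,\sigma]$ let $\ell_i(t)=\sum_{j=1}^i(f(s_j)-\hat f(s_{j-1},s_j))+f(t)-\hat f(s_i,t)$ (the length of $\bigcup_{j\le i}[[\rho,p_f(s_j)]]\cup[[\rho,p_f(t)]]$);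 $s_{i+1}$ is the first point of an independent Poisson process on $[s_i,\sigma]$ with intensity $\ell_i(t)dt$, and if this process has no points then $N=i$. *)

theory Defs
  imports "HOL-Probability.Probability"
begin

definition excursion :: "real \<Rightarrow> (real \<Rightarrow> real) \<Rightarrow> bool" where
  "excursion \<sigma> f \<longleftrightarrow> continuous_on {0..\<sigma>} f \<and> (\<forall>x\<in>{0..\<sigma>}. 0 \<le> f x)
     \<and> (\<forall>x\<in>{0..\<sigma>}. f x = 0 \<longleftrightarrow> x = 0 \<or> x = \<sigma>)"

definition fhat :: "(real \<Rightarrow> real) \<Rightarrow> real \<Rightarrow> real \<Rightarrow> real" where
  "fhat f x y = Inf (f ` {min x y..max x y})"

text \<open>First point of a Poisson process on [a,b] with intensity lam(t)dt, realised by
  the time change of a standard exponential variable e: the first time the cumulative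
  intensity reaches e; None if the process has no point in [a,b].\<close>
definition first_point :: "(real \<Rightarrow> real) \<Rightarrow> real \<Rightarrow> real \<Rightarrow> real \<Rightarrow> real option" where
  "first_point lam a b e =
     (if \<exists>t\<in>{a..b}. e \<le> integral {a..t} lam
      then Some (Inf {t\<in>{a..b}. e \<le> integral {a..t} lam}) else None)"

text \<open>State after step i: Some (s_i, L_i) with
  L_i = sum_{j<=i} (f s_j - fhat f s_{j-1} s_j), so that
  ell_i(t) = L_i + f t - fhat f s_i t; None if the construction has stopped (N < i).\<close>
primrec bi_state :: "(real \<Rightarrow> real) \<Rightarrow> real \<Rightarrow> (nat \<Rightarrow> real) \<Rightarrow> nat \<Rightarrow> (real \<times> real) option" where
  "bi_state f \<sigma> e 0 = Some (0, 0)"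
| "bi_state f \<sigma> e (Suc i) =
     (case bi_state f \<sigma> e i of
        None \<Rightarrow> None
      | Some (a, L) \<Rightarrow>
          map_option (\<lambda>s. (s, L + f s - fhat f a s))
            (first_point (\<lambda>t. L + f t - fhat f a t) a \<sigma> (e (Suc i))))"

definition bi_time :: "(real \<Rightarrow> real) \<Rightarrow> real \<Rightarrow> (nat \<Rightarrow> real) \<Rightarrow> nat \<Rightarrow> real" where
  "bi_time f \<sigma> e i = fst (the (bi_state f \<sigma> e i))"

definition bi_N :: "(real \<Rightarrow> real) \<Rightarrow> real \<Rightarrow> (nat \<Rightarrow> real) \<Rightarrow> nat" where
  "bi_N f \<sigma> e = (LEAST i. bi_state f \<sigma> e (Suc i) = None)"

definition tt :: "(nat \<Rightarrow> real) \<Rightarrow> nat \<Rightarrow> real" where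
  "tt t i = (if i = 0 then 0 else t i)"

definition incr :: "(real \<Rightarrow> real) \<Rightarrow> (nat \<Rightarrow> real) \<Rightarrow> nat \<Rightarrow> real" where
  "incr f t i = f (tt t i) - fhat f (tt t (i - 1)) (tt t i)"

definition Ifun :: "(nat \<Rightarrow> real) \<Rightarrow> nat \<Rightarrow> real \<Rightarrow> nat" where
  "Ifun t n x = Max ({0} \<union> {i\<in>{1..n}. t i < x})"

definition bi_density :: "(real \<Rightarrow> real) \<Rightarrow> real \<Rightarrow> nat \<Rightarrow> (nat \<Rightarrow> real) \<Rightarrow> real" where
  "bi_density f \<sigma> n t =
     (\<Prod>k=1..n. \<Sum>i=1..k. incr f t i) *
     exp (- integral {0..\<sigma>} (\<lambda>x. f x - fhat f (tt t (Ifun t n x)) x + (\<Sum>i=1..Ifun t n x. incr f t i)))"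

definition ordered_times :: "real \<Rightarrow> nat \<Rightarrow> (nat \<Rightarrow> real) set" where
  "ordered_times \<sigma> n = {t. (\<forall>i\<in>{1..n}. 0 < t i \<and> t i < \<sigma>) \<and> (\<forall>i\<in>{1..<n}. t i < t (Suc i))}"

end

theory Submission
  imports Defs
begin



locale exc =
  fixes \<sigma> :: real and f :: "real \<Rightarrow> real"
  assumes sig: "0 < \<sigma>" and exc: "excursion \<sigma> f"
begin

definition clamp :: "real \<Rightarrow> real" where "clamp x = max 0 (min \<sigma> x)"
definition fR :: "real \<Rightarrow> real" where "fR x = f (clamp x)"
definition hR :: "real \<Rightarrow> real \<Rightarrow> real" where "hR a x = fhat fR a x"
definition lamR :: "real \<Rightarrow> real \<Rightarrow> real \<Rightarrow> real" where "lamR a L t = L + fR t - hR a t"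
definition LamR :: "real \<Rightarrow> real \<Rightarrow> real \<Rightarrow> real" where "LamR a L t = integral {a..t} (lamR a L)"

lemma clamp_close: fixes a x a' x' y d :: real
  shows "\<bar>a-a'\<bar> < d \<Longrightarrow> \<bar>x-x'\<bar> < d \<Longrightarrow> min a x \<le> y \<Longrightarrow> y \<le> max a x \<Longrightarrow> \<bar>max (min a' x') (min (max a' x') y) - y\<bar> < d"
  by (cases "a \<le> x"; cases "a' \<le> x'"; cases "y \<le> min a' x'"; cases "y \<le> max a' x'") (auto simp: abs_less_iff min_def max_def)

lemma f_cont: "continuous_on {0..\<sigma>} f" and f_nonneg: "x \<in> {0..\<sigma>} \<Longrightarrow> 0 \<le> f x"
  and f_zero: "x \<in> {0..\<sigma>} \<Longrightarrow> f x = 0 \<longleftrightarrow> x = 0 \<or> x = \<sigma>"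
  using exc unfolding excursion_def by auto

lemma clamp_in: "clamp x \<in> {0..\<sigma>}" using sig by (auto simp: clamp_def)
lemma clamp_id: "x \<in> {0..\<sigma>} \<Longrightarrow> clamp x = x" by (auto simp: clamp_def)
lemma clamp_dist: "\<bar>clamp x - clamp y\<bar> \<le> \<bar>x - y\<bar>" by (auto simp: clamp_def)

lemma fR_eq: "x \<in> {0..\<sigma>} \<Longrightarrow> fR x = f x" by (simp add: fR_def clamp_id)
lemma fR_nonneg: "0 \<le> fR x" using f_nonneg clamp_in by (simp add: fR_def)
lemma fR_0: "fR 0 = 0" using f_zero[of 0] sig by (simp add: fR_eq)
lemma fR_pos: "0 < x \<Longrightarrow> x < \<sigma> \<Longrightarrow> 0 < fR x"
  using f_zero[of x] f_nonneg[of x] fR_eq[of x] by fastforce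

lemma fR_ucont: "uniformly_continuous_on UNIV fR"
proof -
  have uc: "uniformly_continuous_on {0..\<sigma>} f"
    by (rule compact_uniformly_continuous[OF f_cont]) auto
  show ?thesis unfolding uniformly_continuous_on_def
  proof (intro allI impI)
    fix e :: real assume "0 < e"
    then obtain d where d: "d > 0" "\<forall>x\<in>{0..\<sigma>}. \<forall>x'\<in>{0..\<sigma>}. dist x' x < d \<longrightarrow> dist (f x') (f x) < e"
      using uc unfolding uniformly_continuous_on_def by metis
    show "\<exists>d>0. \<forall>x\<in>UNIV. \<forall>x'\<in>UNIV. dist x' x < d \<longrightarrow> dist (fR x') (fR x) < e"
    proof (intro exI[of _ d] conjI ballI impI)
      fix x x' :: real assume "dist x' x < d"
      then have "dist (clamp x') (clamp x) < d" using clamp_dist[of x' x] by (simp add: dist_real_def)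
      then show "dist (fR x') (fR x) < e" using d clamp_in by (simp add: fR_def)
    qed (use d in auto)
  qed
qed

lemma fR_cont: "continuous_on UNIV fR"
  using fR_ucont uniformly_continuous_imp_continuous by blast

lemma fR_bounded: obtains B where "B > 0" "\<And>x. fR x \<le> B"
proof -
  have "compact (f ` {0..\<sigma>})" by (rule compact_continuous_image[OF f_cont]) auto
  then obtain B0 where "\<forall>y\<in>f ` {0..\<sigma>}. norm y \<le> B0" using compact_imp_bounded bounded_iff by metis
  then have "\<And>x. fR x \<le> max B0 1"
  proof -
    fix x have "norm (f (clamp x)) \<le> B0" using \<open>\<forall>y\<in>f ` {0..\<sigma>}. norm y \<le> B0\<close> clamp_in by blast
    then show "fR x \<le> max B0 1" by (simp add: fR_def)
  qed
  then show ?thesis using that[of "max B0 1"] by auto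
qed

lemma hR_attains: "\<exists>y\<in>{min a x..max a x}. hR a x = fR y \<and> (\<forall>z\<in>{min a x..max a x}. fR y \<le> fR z)"
proof -
  obtain y where y: "y \<in> {min a x..max a x}" "\<forall>z\<in>{min a x..max a x}. fR y \<le> fR z"
  proof -
    have "compact {min a x..max a x}" "{min a x..max a x} \<noteq> {}" by auto
    moreover have "continuous_on {min a x..max a x} fR" using continuous_on_subset[OF fR_cont] by blast
    ultimately have "\<exists>y\<in>{min a x..max a x}. \<forall>z\<in>{min a x..max a x}. fR y \<le> fR z"
      by (rule continuous_attains_inf)
    then show ?thesis using that by blast
  qed
  have "Inf (fR ` {min a x..max a x}) = fR y"
    by (rule cInf_eq_minimum) (use y in auto)
  then show ?thesis using y by (auto simp: hR_def fhat_def)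
qed

lemma hR_le: "z \<in> {min a x..max a x} \<Longrightarrow> hR a z' \<le> fR z' \<Longrightarrow> True" by simp

lemma hR_lower: "z \<in> {min a x..max a x} \<Longrightarrow> hR a x \<le> fR z"
  using hR_attains[of a x] by auto

lemma hR_nonneg: "0 \<le> hR a x"
  using hR_attains[of a x] fR_nonneg by metis

lemma hR_le_f: "hR a x \<le> fR x" by (rule hR_lower) auto
lemma hR_same: "hR a a = fR a" using hR_attains[of a a] by auto
lemma hR_0: "hR 0 x = 0" using hR_lower[of 0 0 x] hR_nonneg[of 0 x] fR_0 by auto

lemma hR_eq: "a \<in> {0..\<sigma>} \<Longrightarrow> x \<in> {0..\<sigma>} \<Longrightarrow> hR a x = fhat f a x"
proof -
  assume "a \<in> {0..\<sigma>}" "x \<in> {0..\<sigma>}"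
  then have "fR ` {min a x..max a x} = f ` {min a x..max a x}"
    by (intro image_cong refl fR_eq) (auto simp: min_def max_def split: if_split_asm)
  then show ?thesis by (simp add: hR_def fhat_def)
qed

lemma hR_close:
  assumes "e > 0"
  shows "\<exists>d>0. \<forall>a x a' x'. \<bar>a - a'\<bar> < d \<longrightarrow> \<bar>x - x'\<bar> < d \<longrightarrow> hR a' x' \<le> hR a x + e"
proof -
  obtain d where d: "d > 0" "\<forall>x\<in>UNIV. \<forall>x'\<in>UNIV. dist x' x < d \<longrightarrow> dist (fR x') (fR x) < e"
    using fR_ucont assms unfolding uniformly_continuous_on_def by metis
  show ?thesis
  proof (intro exI[of _ d] conjI allI impI)
    fix a x a' x' :: real assume h: "\<bar>a - a'\<bar> < d" "\<bar>x - x'\<bar> < d"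
    obtain y where y: "y \<in> {min a x..max a x}" "hR a x = fR y" using hR_attains[of a x] by blast
    define y' where "y' = max (min a' x') (min (max a' x') y)"
    have y'in: "y' \<in> {min a' x'..max a' x'}" by (auto simp: y'_def)
    have "\<bar>y' - y\<bar> < d" using h y(1) unfolding y'_def by (intro clamp_close) auto
    then have "\<bar>fR y' - fR y\<bar> < e" using d(2) by (auto simp: dist_real_def)
    then have "fR y' < fR y + e" by linarith
    then show "hR a' x' \<le> hR a x + e" using hR_lower[OF y'in] y(2) by linarith
  qed (use d in auto)
qed

lemma hR_cont: "continuous_on UNIV (\<lambda>z. hR (fst z) (snd z))"
proof -
  have "uniformly_continuous_on UNIV (\<lambda>z. hR (fst z) (snd z))"
    unfolding uniformly_continuous_on_def
  proof (intro allI impI)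
    fix e :: real assume "e > 0"
    then have "e/2 > 0" by simp
    from hR_close[OF this] obtain d where d: "d>0"
      "\<forall>a x a' x'. \<bar>a - a'\<bar> < d \<longrightarrow> \<bar>x - x'\<bar> < d \<longrightarrow> hR a' x' \<le> hR a x + e/2" by blast
    show "\<exists>d>0. \<forall>x\<in>UNIV. \<forall>x'\<in>UNIV. dist x' x < d \<longrightarrow>
        dist (hR (fst x') (snd x')) (hR (fst x) (snd x)) < e"
    proof (intro exI[of _ d] conjI ballI impI)
      fix z z' :: "real \<times> real" assume "dist z' z < d"
      then have "\<bar>fst z - fst z'\<bar> < d" "\<bar>snd z - snd z'\<bar> < d"
        by (metis dist_commute dist_fst_le dist_real_def le_less_trans dist_snd_le)+
      then have "hR (fst z') (snd z') \<le> hR (fst z) (snd z) + e/2"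
        "hR (fst z) (snd z) \<le> hR (fst z') (snd z') + e/2"
        using d(2) by (auto simp: abs_minus_commute)
      then show "dist (hR (fst z') (snd z')) (hR (fst z) (snd z)) < e"
        using \<open>e > 0\<close> by (auto simp: dist_real_def)
    qed (use d in auto)
  qed
  then show ?thesis using uniformly_continuous_imp_continuous by blast
qed

end



context exc begin

lemma lamR_cont: "continuous_on UNIV (lamR a L)"
proof -
  have "continuous_on UNIV (\<lambda>t. hR (fst (a, t)) (snd (a, t)))"
    by (rule continuous_on_compose2[OF hR_cont]) (auto intro!: continuous_intros)
  then show ?thesis unfolding lamR_def using fR_cont by (auto intro!: continuous_intros)
qed

lemma lamR_cont3: "continuous_on UNIV (\<lambda>z::real\<times>real\<times>real. lamR (fst z) (fst (snd z)) (snd (snd z)))"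
proof -
  have "continuous_on UNIV (\<lambda>z::real\<times>real\<times>real. hR (fst (fst z, snd (snd z))) (snd (fst z, snd (snd z))))"
    by (rule continuous_on_compose2[OF hR_cont]) (auto intro!: continuous_intros)
  moreover have "continuous_on UNIV (\<lambda>z::real\<times>real\<times>real. fR (snd (snd z)))"
    by (rule continuous_on_compose2[OF fR_cont]) (auto intro!: continuous_intros)
  ultimately show ?thesis unfolding lamR_def by (auto intro!: continuous_intros)
qed

lemma lamR_ge: "L \<le> lamR a L t" using hR_le_f[of a t] by (simp add: lamR_def)

lemma lamR_meas0: "(\<lambda>z::real\<times>real\<times>real. lamR (fst z) (fst (snd z)) (snd (snd z))) \<in> borel_measurable borel"
  by (rule borel_measurable_continuous_onI[OF lamR_cont3])

lemma lamR_meas[measurable (raw)]: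
  assumes [measurable]: "g1 \<in> borel_measurable M" "g2 \<in> borel_measurable M" "g3 \<in> borel_measurable M"
  shows "(\<lambda>w. lamR (g1 w) (g2 w) (g3 w)) \<in> borel_measurable M"
proof -
  have "(\<lambda>w. (g1 w, g2 w, g3 w)) \<in> borel_measurable M" by measurable
  from measurable_compose[OF this lamR_meas0] show ?thesis by simp
qed

lemma lamR_set_integrable: "set_integrable lborel {a..t} (lamR a L)"
  unfolding set_integrable_def
  by (rule borel_integrable_compact) (auto intro: continuous_on_subset[OF lamR_cont])

lemma lamR_integrable_on: "lamR a L integrable_on {c..d}"
  by (rule integrable_continuous_interval) (auto intro: continuous_on_subset[OF lamR_cont])

lemma LamR_lint: "LamR a L t = (\<integral>x. indicator {a..t} x *\<^sub>R lamR a L x \<partial>lborel)"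
  using set_borel_integral_eq_integral(2)[OF lamR_set_integrable[of a t L]]
  by (simp add: LamR_def set_lebesgue_integral_def)

lemma LamR_meas0: "(\<lambda>z::real\<times>real\<times>real. LamR (fst z) (fst (snd z)) (snd (snd z))) \<in> borel_measurable borel"
proof -
  have eq: "(\<lambda>z::real\<times>real\<times>real. LamR (fst z) (fst (snd z)) (snd (snd z))) =
     (\<lambda>z. \<integral>x. (if fst z \<le> x \<and> x \<le> snd (snd z) then 1 else 0) * lamR (fst z) (fst (snd z)) x \<partial>lborel)"
    by (auto simp: LamR_lint indicator_def intro!: ext Bochner_Integration.integral_cong)
  have [measurable]: "(\<lambda>(z::real\<times>real\<times>real, x::real). (if fst z \<le> x \<and> x \<le> snd (snd z) then 1 else 0) * lamR (fst z) (fst (snd z)) x)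
     \<in> borel_measurable ((borel \<Otimes>\<^sub>M borel \<Otimes>\<^sub>M borel) \<Otimes>\<^sub>M lborel)"
    by measurable
  show ?thesis unfolding eq borel_prod[symmetric] by measurable
qed

lemma LamR_meas[measurable (raw)]:
  assumes [measurable]: "g1 \<in> borel_measurable M" "g2 \<in> borel_measurable M" "g3 \<in> borel_measurable M"
  shows "(\<lambda>w. LamR (g1 w) (g2 w) (g3 w)) \<in> borel_measurable M"
proof -
  have "(\<lambda>w. (g1 w, g2 w, g3 w)) \<in> borel_measurable M" by measurable
  from measurable_compose[OF this LamR_meas0] show ?thesis by simp
qed

definition GX :: "real \<Rightarrow> real \<Rightarrow> real \<Rightarrow> real" where
  "GX a L t = integral {a-1..t} (lamR a L) - integral {a-1..a} (lamR a L)"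

lemma GX_deriv: "a - 1 < t \<Longrightarrow> (GX a L has_real_derivative lamR a L t) (at t)"
proof -
  assume t: "a - 1 < t"
  have "((\<lambda>x. integral {a-1..x} (lamR a L)) has_real_derivative lamR a L t) (at t within {a-1..t+1})"
    by (rule integral_has_real_derivative) (use t in \<open>auto intro: continuous_on_subset[OF lamR_cont]\<close>)
  moreover have "at t within {a-1..t+1} = at t"
    by (rule at_within_interior) (use t in auto)
  ultimately have "((\<lambda>x. integral {a-1..x} (lamR a L)) has_real_derivative lamR a L t) (at t)" by simp
  then have "((\<lambda>x. integral {a-1..x} (lamR a L) - integral {a-1..a} (lamR a L)) has_real_derivative lamR a L t - 0) (at t)"
    by (intro DERIV_diff DERIV_const)
  then show ?thesis by (simp add: GX_def[abs_def])
qed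

lemma GX_eq: "a \<le> t \<Longrightarrow> GX a L t = LamR a L t"
proof -
  assume "a \<le> t"
  then have "integral {a-1..a} (lamR a L) + integral {a..t} (lamR a L) = integral {a-1..t} (lamR a L)"
    by (intro Henstock_Kurzweil_Integration.integral_combine lamR_integrable_on) auto
  then show ?thesis by (simp add: GX_def LamR_def)
qed

lemma GX_cont: "continuous_on {a..b} (GX a L)"
  by (rule has_real_derivative_imp_continuous_on) (rule GX_deriv, auto)

lemma LamR_cont: "continuous_on {a..b} (LamR a L)"
  using GX_cont[of a b L] by (rule continuous_on_cong[THEN iffD1, rotated 2]) (auto simp: GX_eq)

lemma LamR_self: "LamR a L a = 0" by (simp add: LamR_def)

lemma LamR_mono: "0 \<le> L \<Longrightarrow> a \<le> t \<Longrightarrow> t \<le> t' \<Longrightarrow> LamR a L t \<le> LamR a L t'"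
proof -
  assume h: "0 \<le> L" "a \<le> t" "t \<le> t'"
  have "GX a L t \<le> GX a L t'"
  proof (rule DERIV_nonneg_imp_increasing_open[OF h(3)])
    fix x assume "t < x" "x < t'"
    then show "\<exists>y. DERIV (GX a L) x :> y \<and> y \<ge> 0"
      using h GX_deriv[of a x L] lamR_ge[of L a x] by (intro exI[of _ "lamR a L x"]) auto
  qed (rule continuous_on_subset[OF GX_cont[of a t' L]], use h in auto)
  then show ?thesis using h by (simp add: GX_eq)
qed

definition ok :: "real \<Rightarrow> real \<Rightarrow> bool" where
  "ok a L \<longleftrightarrow> (a = 0 \<and> L = 0) \<or> (0 < a \<and> a \<le> \<sigma> \<and> 0 < L) \<or> (a = \<sigma> \<and> L = 0)"

definition good :: "real \<Rightarrow> real \<Rightarrow> bool" where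
  "good a L \<longleftrightarrow> ok a L \<and> a < \<sigma>"

lemma ok_bounds: "ok a L \<Longrightarrow> 0 \<le> a \<and> a \<le> \<sigma> \<and> 0 \<le> L" using sig by (auto simp: ok_def)

lemma lamR_pos: "good a L \<Longrightarrow> a < t \<Longrightarrow> t < \<sigma> \<Longrightarrow> 0 < lamR a L t"
  using lamR_ge[of L a t] fR_pos[of t] sig by (auto simp: good_def ok_def lamR_def hR_0)

lemma LamR_strict: "good a L \<Longrightarrow> a \<le> t \<Longrightarrow> t < t' \<Longrightarrow> t' \<le> \<sigma> \<Longrightarrow> LamR a L t < LamR a L t'"
proof -
  assume h: "good a L" "a \<le> t" "t < t'" "t' \<le> \<sigma>"
  have "GX a L t < GX a L t'"
  proof (rule DERIV_pos_imp_increasing_open[OF h(3)])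
    fix x assume "t < x" "x < t'"
    then show "\<exists>y. DERIV (GX a L) x :> y \<and> y > 0"
      using h GX_deriv[of a x L] lamR_pos[of a L x] by (intro exI[of _ "lamR a L x"]) auto
  qed (rule continuous_on_subset[OF GX_cont[of a t' L]], use h in auto)
  then show ?thesis using h by (simp add: GX_eq)
qed

definition Tm :: "real \<Rightarrow> real \<Rightarrow> real \<Rightarrow> real" where
  "Tm a L x = Inf {t \<in> {a..\<sigma>}. x \<le> LamR a L t}"

lemma Tm_props:
  assumes "ok a L" "x \<le> LamR a L \<sigma>"
  shows "Tm a L x \<in> {a..\<sigma>}" "x \<le> LamR a L (Tm a L x)"
    and "Tm a L x \<le> c \<longleftrightarrow> \<sigma> \<le> c \<or> (a \<le> c \<and> x \<le> LamR a L c)"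
proof -
  define S where "S = {t \<in> {a..\<sigma>}. x \<le> LamR a L t}"
  have b: "0 \<le> a" "a \<le> \<sigma>" "0 \<le> L" using ok_bounds[OF assms(1)] by auto
  have ne: "S \<noteq> {}" using assms b by (auto simp: S_def intro!: exI[of _ \<sigma>])
  have bdd: "bdd_below S" by (auto simp: S_def bdd_below_def)
  have "closed ({a..\<sigma>} \<inter> LamR a L -` {x..})"
    by (rule continuous_closed_preimage[OF LamR_cont]) auto
  moreover have "{a..\<sigma>} \<inter> LamR a L -` {x..} = S" by (auto simp: S_def)
  ultimately have cl: "closed S" by simp
  have inS: "Inf S \<in> S" by (rule closed_contains_Inf[OF ne bdd cl])
  have T: "Tm a L x = Inf S" by (simp add: Tm_def S_def)
  show 1: "Tm a L x \<in> {a..\<sigma>}" and 2: "x \<le> LamR a L (Tm a L x)" using inS T by (auto simp: S_def)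
  show "Tm a L x \<le> c \<longleftrightarrow> \<sigma> \<le> c \<or> (a \<le> c \<and> x \<le> LamR a L c)"
  proof
    assume le: "Tm a L x \<le> c"
    show "\<sigma> \<le> c \<or> (a \<le> c \<and> x \<le> LamR a L c)"
    proof (cases "\<sigma> \<le> c")
      case False
      then have "LamR a L (Tm a L x) \<le> LamR a L c" using LamR_mono[of L a "Tm a L x" c] 1 le b by auto
      then show ?thesis using 1 2 le by auto
    qed simp
  next
    assume r: "\<sigma> \<le> c \<or> (a \<le> c \<and> x \<le> LamR a L c)"
    show "Tm a L x \<le> c"
    proof (cases "c \<le> \<sigma>")
      case True
      show ?thesis
      proof (cases "\<sigma> \<le> c")
        case True then show ?thesis using 1 by auto
      next
        case False
        then have "c \<in> S" using r True by (auto simp: S_def)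
        then show ?thesis using T cInf_lower[OF _ bdd] by auto
      qed
    next
      case False then show ?thesis using 1 by auto
    qed
  qed
qed

lemma Tm_Lam: assumes "good a L" "t \<in> {a..\<sigma>}" shows "Tm a L (LamR a L t) = t"
proof -
  have okk: "ok a L" using assms by (simp add: good_def)
  have b: "0 \<le> L" using ok_bounds[OF okk] by auto
  have le: "LamR a L t \<le> LamR a L \<sigma>" using LamR_mono[OF b, of a t \<sigma>] assms by auto
  note P = Tm_props[OF okk le]
  have "Tm a L (LamR a L t) \<le> t" using P(3)[of t] assms by auto
  moreover have "\<not> Tm a L (LamR a L t) < t"
  proof
    assume "Tm a L (LamR a L t) < t"
    then have "LamR a L (Tm a L (LamR a L t)) < LamR a L t"
      using LamR_strict[OF assms(1)] P(1) assms(2) by auto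
    then show False using P(2) by simp
  qed
  ultimately show ?thesis by simp
qed

lemma Tm_range: assumes "good a L" "0 < x" "x < LamR a L \<sigma>"
  shows "a < Tm a L x" "Tm a L x < \<sigma>"
proof -
  have okk: "ok a L" using assms by (simp add: good_def)
  have b: "a \<le> \<sigma>" using ok_bounds[OF okk] by auto
  obtain t where t: "a \<le> t" "t \<le> \<sigma>" "LamR a L t = x"
    using IVT'[of "LamR a L" a x \<sigma>] LamR_cont[of a \<sigma> L] assms b by (auto simp: LamR_self)
  have T: "Tm a L x = t" using Tm_Lam[OF assms(1), of t] t by auto
  show "a < Tm a L x" using T t assms(2) LamR_self[of a L] by (cases "t = a") auto
  show "Tm a L x < \<sigma>" using T t assms(3) by (cases "t = \<sigma>") auto
qed

lemma ok_meas[measurable (raw)]: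
  assumes [measurable]: "g1 \<in> borel_measurable M" "g2 \<in> borel_measurable M"
  shows "Measurable.pred M (\<lambda>w. ok (g1 w) (g2 w))"
  unfolding ok_def by measurable

definition stepT :: "real \<times> real \<Rightarrow> real \<Rightarrow> real \<times> real" where
  "stepT p x = (if ok (fst p) (snd p) \<and> x \<le> LamR (fst p) (snd p) \<sigma>
     then (Tm (fst p) (snd p) x, lamR (fst p) (snd p) (Tm (fst p) (snd p) x)) else (\<sigma> + 1, 0))"

lemma Tz_meas: "(\<lambda>z::(real\<times>real)\<times>real. if ok (fst (fst z)) (snd (fst z)) \<and> snd z \<le> LamR (fst (fst z)) (snd (fst z)) \<sigma>
   then Tm (fst (fst z)) (snd (fst z)) (snd z) else \<sigma> + 1) \<in> borel_measurable borel"
  unfolding borel_measurable_iff_le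
proof
  fix c
  let ?C = "\<lambda>z::(real\<times>real)\<times>real. ok (fst (fst z)) (snd (fst z)) \<and> snd z \<le> LamR (fst (fst z)) (snd (fst z)) \<sigma>"
  have eq: "{w \<in> space borel. (if ?C w then Tm (fst (fst w)) (snd (fst w)) (snd w) else \<sigma> + 1) \<le> c}
    = {w \<in> space borel. (?C w \<and> (\<sigma> \<le> c \<or> (fst (fst w) \<le> c \<and> snd w \<le> LamR (fst (fst w)) (snd (fst w)) c)))
         \<or> (\<not> ?C w \<and> \<sigma> + 1 \<le> c)}"
    using Tm_props(3) by auto
  show "{w \<in> space borel. (if ?C w then Tm (fst (fst w)) (snd (fst w)) (snd w) else \<sigma> + 1) \<le> c} \<in> sets borel"
    unfolding eq unfolding borel_prod[symmetric] by measurable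
qed

lemma stepT_meas0: "(\<lambda>z::(real\<times>real)\<times>real. stepT (fst z) (snd z)) \<in> borel_measurable borel"
proof -
  define C where "C = (\<lambda>z::(real\<times>real)\<times>real. ok (fst (fst z)) (snd (fst z)) \<and> snd z \<le> LamR (fst (fst z)) (snd (fst z)) \<sigma>)"
  define T where "T = (\<lambda>z::(real\<times>real)\<times>real. if C z then Tm (fst (fst z)) (snd (fst z)) (snd z) else \<sigma> + 1)"
  have [measurable]: "T \<in> borel_measurable ((borel \<Otimes>\<^sub>M borel) \<Otimes>\<^sub>M borel)" unfolding T_def C_def borel_prod by (rule Tz_meas)
  have [measurable]: "Measurable.pred ((borel \<Otimes>\<^sub>M borel) \<Otimes>\<^sub>M borel) C" unfolding C_def by measurable
  have eq: "(\<lambda>z. stepT (fst z) (snd z)) = (\<lambda>z. (T z, if C z then lamR (fst (fst z)) (snd (fst z)) (T z) else 0))"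
    by (auto simp: stepT_def T_def C_def)
  show ?thesis unfolding eq borel_prod[symmetric] by measurable
qed

lemma stepT_meas[measurable (raw)]:
  assumes [measurable]: "g \<in> borel_measurable M" "h \<in> borel_measurable M"
  shows "(\<lambda>w. stepT (g w) (h w)) \<in> borel_measurable M"
proof -
  have "(\<lambda>w. (g w, h w)) \<in> borel_measurable M" by measurable
  from measurable_compose[OF this stepT_meas0] show ?thesis by simp
qed

end



context exc begin

definition Exp :: "real measure" where "Exp = density lborel (\<lambda>x. ennreal (exponential_density 1 x))"

lemma prob_Exp: "prob_space Exp"
  unfolding Exp_def by (rule prob_space_exponential_density) simp

lemma sets_Exp[measurable_cong]: "sets Exp = sets borel"
  by (simp add: Exp_def)

lemma space_Exp: "space Exp = UNIV"
  by (simp add: Exp_def)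

lemma prob_S: "prob_space (stream_space Exp)"
  by (rule prob_space.prob_space_stream_space[OF prob_Exp])

lemma space_S: "space (stream_space Exp) = UNIV"
  by (simp add: space_stream_space space_Exp)

primrec cs :: "real \<times> real \<Rightarrow> real stream \<Rightarrow> nat \<Rightarrow> real \<times> real" where
  "cs p s 0 = p"
| "cs p s (Suc i) = stepT (cs p s i) (s !! i)"

lemma cs_Cons: "cs p (x ## s) (Suc i) = cs (stepT p x) s i"
  by (induction i) auto

lemma cs_meas[measurable]: "(\<lambda>s. cs p s i) \<in> borel_measurable (stream_space Exp)"
  by (induction i) simp_all

abbreviation dead :: "real \<times> real" where "dead \<equiv> (\<sigma> + 1, 0)"

lemma fR_sig: "fR \<sigma> = 0" using f_zero[of \<sigma>] sig by (simp add: fR_eq)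

lemma stepT_inv: "ok (fst p) (snd p) \<or> p = dead \<Longrightarrow> ok (fst (stepT p x)) (snd (stepT p x)) \<or> stepT p x = dead"
proof -
  assume h: "ok (fst p) (snd p) \<or> p = dead"
  show ?thesis
  proof (cases "ok (fst p) (snd p) \<and> x \<le> LamR (fst p) (snd p) \<sigma>")
    case False
    have "stepT p x = dead" unfolding stepT_def by (rule if_not_P[OF False])
    then show ?thesis by simp
  next
    case True
    obtain a L where p: "p = (a, L)" by (cases p)
    have okk: "ok a L" and xle: "x \<le> LamR a L \<sigma>" using True p by auto
    define T where "T = Tm a L x"
    have T: "T \<in> {a..\<sigma>}" using Tm_props(1)[OF okk xle] by (simp add: T_def)
    have st: "stepT p x = (T, lamR a L T)" using True p by (simp add: stepT_def T_def)
    have okc: "(a = 0 \<and> L = 0) \<or> (0 < a \<and> a \<le> \<sigma> \<and> 0 < L) \<or> (a = \<sigma> \<and> L = 0)"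
      using okk by (simp add: ok_def)
    have "ok T (lamR a L T)"
      using okc
    proof (elim disjE)
      assume "a = 0 \<and> L = 0"
      then have l: "lamR a L T = fR T" by (simp add: lamR_def hR_0)
      show ?thesis
        using T fR_pos[of T] fR_0 fR_sig \<open>a = 0 \<and> L = 0\<close> unfolding l ok_def
        by (cases "T = 0"; cases "T = \<sigma>") auto
    next
      assume h2: "0 < a \<and> a \<le> \<sigma> \<and> 0 < L"
      then show ?thesis using T lamR_ge[of L a T] by (auto simp: ok_def)
    next
      assume h3: "a = \<sigma> \<and> L = 0"
      then have "T = \<sigma>" using T by auto
      then show ?thesis using h3 by (simp add: ok_def lamR_def hR_same)
    qed
    then show ?thesis using st by simp
  qed
qed

lemma cs_inv: "ok (fst p) (snd p) \<Longrightarrow> ok (fst (cs p s i)) (snd (cs p s i)) \<or> cs p s i = dead"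
proof (induction i)
  case (Suc i)
  then show ?case using stepT_inv[of "cs p s i" "s !! i"] by simp
qed simp

lemma ok_le: "ok a L \<Longrightarrow> a \<le> \<sigma>" using ok_bounds by blast

lemma alive_iff: "ok (fst p) (snd p) \<Longrightarrow> fst (cs p s i) \<le> \<sigma> \<longleftrightarrow> ok (fst (cs p s i)) (snd (cs p s i))"
  using cs_inv[of p s i] ok_le sig by (auto simp: ok_def)

lemma dead_step: "stepT dead x = dead"
  using sig by (simp add: stepT_def ok_def)

lemma dead_stays: "ok (fst p) (snd p) \<Longrightarrow> \<sigma> < fst (cs p s i) \<Longrightarrow> \<sigma> < fst (cs p s (i + j))"
proof (induction j)
  case (Suc j)
  then have "cs p s (i + j) = dead" using cs_inv[of p s "i+j"] ok_le by fastforce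
  then show ?case using sig by (simp add: dead_step)
qed simp

lemma alive_mono: "ok (fst p) (snd p) \<Longrightarrow> j \<le> i \<Longrightarrow> fst (cs p s i) \<le> \<sigma> \<Longrightarrow> fst (cs p s j) \<le> \<sigma>"
  using dead_stays[of p s j "i - j"] by force

lemma stepT_good:
  assumes "good a L" "0 < x" "x < LamR a L \<sigma>"
  shows "stepT (a, L) x = (Tm a L x, lamR a L (Tm a L x))" "good (Tm a L x) (lamR a L (Tm a L x))"
proof -
  have okk: "ok a L" using assms by (simp add: good_def)
  show st: "stepT (a, L) x = (Tm a L x, lamR a L (Tm a L x))" using okk assms by (simp add: stepT_def)
  have "Tm a L x \<le> \<sigma>" using Tm_props(1)[OF okk, of x] assms(3) by auto
  then have "ok (Tm a L x) (lamR a L (Tm a L x))" using stepT_inv[of "(a,L)" x] okk st sig by auto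
  then show "good (Tm a L x) (lamR a L (Tm a L x))" using Tm_range[OF assms] by (simp add: good_def)
qed

lemma stepT_dead: "ok a L \<Longrightarrow> LamR a L \<sigma> < x \<Longrightarrow> stepT (a, L) x = dead"
  by (simp add: stepT_def)

lemma fst_borel[measurable]: "(fst :: real \<times> real \<Rightarrow> real) \<in> borel_measurable borel"
  by (rule borel_measurable_continuous_onI) (intro continuous_intros)

lemma stepT_a_meas[measurable]: "stepT (a, L) \<in> borel_measurable borel"
  using stepT_meas[of "\<lambda>_. (a, L)" borel "\<lambda>x. x"] by simp

lemma Tm_meas:
  fixes Psi :: "real \<Rightarrow> ennreal"
  assumes "ok a L" and [measurable]: "Psi \<in> borel_measurable borel"
  shows "(\<lambda>x. if 0 < x \<and> x < LamR a L \<sigma> then Psi (Tm a L x) else 0) \<in> borel_measurable borel"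
proof -
  have eq: "(\<lambda>x. if 0 < x \<and> x < LamR a L \<sigma> then Psi (Tm a L x) else 0) =
     (\<lambda>x. if 0 < x \<and> x < LamR a L \<sigma> then Psi (fst (stepT (a, L) x)) else 0)"
    using assms by (auto simp: stepT_def)
  show ?thesis unfolding eq by measurable
qed

lemma subst_step:
  assumes g: "good a L" and Psi[measurable]: "Psi \<in> borel_measurable borel"
  shows "(\<integral>\<^sup>+x. (if 0 < x \<and> x < LamR a L \<sigma> then Psi (Tm a L x) else 0) \<partial>Exp)
       = (\<integral>\<^sup>+t. indicator {a<..<\<sigma>} t * ennreal (lamR a L t * exp (- LamR a L t)) * Psi t \<partial>lborel)"
proof -
  have okk: "ok a L" and aS: "a < \<sigma>" using g by (auto simp: good_def)
  have L0: "0 \<le> L" using ok_bounds[OF okk] by simp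
  let ?Lam = "LamR a L \<sigma>"
  define F where "F x = ennreal (exp (- x)) * Psi (fst (stepT (a, L) x))" for x
  have Fm[measurable]: "F \<in> borel_measurable borel" unfolding F_def by measurable
  have [measurable]: "(\<lambda>x. if 0 < x \<and> x < LamR a L \<sigma> then Psi (Tm a L x) else 0) \<in> borel_measurable borel"
    by (rule Tm_meas[OF okk Psi])
  have "(\<integral>\<^sup>+x. (if 0 < x \<and> x < ?Lam then Psi (Tm a L x) else 0) \<partial>Exp)
      = (\<integral>\<^sup>+x. ennreal (exponential_density 1 x) * (if 0 < x \<and> x < ?Lam then Psi (Tm a L x) else 0) \<partial>lborel)"
    unfolding Exp_def by (rule nn_integral_density) measurable
  also have "\<dots> = (\<integral>\<^sup>+x. F x * indicator {GX a L a..GX a L \<sigma>} x \<partial>lborel)"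
  proof (rule nn_integral_cong_AE)
    have "AE x in lborel. x \<noteq> 0" "AE x in lborel. x \<noteq> ?Lam" by (rule AE_lborel_singleton)+
    then show "AE x in lborel. ennreal (exponential_density 1 x) * (if 0 < x \<and> x < ?Lam then Psi (Tm a L x) else 0)
        = F x * indicator {GX a L a..GX a L \<sigma>} x"
    proof eventually_elim
      case (elim x)
      have ga: "GX a L a = 0" and gs: "GX a L \<sigma> = ?Lam" using aS by (auto simp: GX_eq LamR_self)
      show ?case
      proof (cases "0 < x \<and> x < ?Lam")
        case True
        then show ?thesis using okk
          by (simp add: F_def ga gs exponential_density_def stepT_def indicator_def)
      next
        case False
        then have "x < 0 \<or> ?Lam < x" using elim by auto
        then show ?thesis using False by (auto simp: F_def ga gs exponential_density_def indicator_def)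
      qed
    qed
  qed
  also have "\<dots> = (\<integral>\<^sup>+t. F (GX a L t) * ennreal (lamR a L t) * indicator {a..\<sigma>} t \<partial>lborel)"
  proof (rule nn_integral_substitution_aux[OF Fm])
    show "\<And>x. x \<in> {a..\<sigma>} \<Longrightarrow> (GX a L has_real_derivative lamR a L x) (at x)"
      by (rule GX_deriv) auto
    show "continuous_on {a..\<sigma>} (lamR a L)" by (rule continuous_on_subset[OF lamR_cont]) auto
    show "\<And>x. x \<in> {a..\<sigma>} \<Longrightarrow> 0 \<le> lamR a L x" using lamR_ge[of L a] L0 by (meson order.trans)
  qed (use aS in auto)
  also have "\<dots> = (\<integral>\<^sup>+t. indicator {a<..<\<sigma>} t * ennreal (lamR a L t * exp (- LamR a L t)) * Psi t \<partial>lborel)"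
  proof (rule nn_integral_cong_AE)
    have "AE x in lborel. x \<noteq> a" "AE x in lborel. x \<noteq> \<sigma>" by (rule AE_lborel_singleton)+
    then show "AE t in lborel. F (GX a L t) * ennreal (lamR a L t) * indicator {a..\<sigma>} t
        = indicator {a<..<\<sigma>} t * ennreal (lamR a L t * exp (- LamR a L t)) * Psi t"
    proof eventually_elim
      case (elim t)
      show ?case
      proof (cases "t \<in> {a<..<\<sigma>}")
        case True
        then have tin: "t \<in> {a..\<sigma>}" by auto
        have le: "LamR a L t \<le> ?Lam" using LamR_mono[OF L0, of a t \<sigma>] True by auto
        have st: "fst (stepT (a, L) (LamR a L t)) = t"
          using okk le Tm_Lam[OF g tin] by (simp add: stepT_def)
        have "lamR a L t \<ge> 0" using lamR_ge[of L a t] L0 by simp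
        then show ?thesis using True
          by (simp add: F_def GX_eq st ennreal_mult' mult_ac)
      next
        case False
        then have "t \<notin> {a..\<sigma>}" using elim by auto
        then show ?thesis using False by simp
      qed
    qed
  qed
  finally show ?thesis .
qed

primrec D :: "nat \<Rightarrow> nat \<Rightarrow> real \<times> real \<Rightarrow> (nat \<Rightarrow> real) \<Rightarrow> ennreal" where
  "D 0 k p w = ennreal (exp (- LamR (fst p) (snd p) \<sigma>))"
| "D (Suc n) k p w = indicator {fst p<..<\<sigma>} (w (Suc k)) *
     ennreal (lamR (fst p) (snd p) (w (Suc k)) * exp (- LamR (fst p) (snd p) (w (Suc k)))) *
     D n (Suc k) (w (Suc k), lamR (fst p) (snd p) (w (Suc k))) w"

lemma D_local: "(\<And>i. Suc k \<le> i \<Longrightarrow> i \<le> k + n \<Longrightarrow> w i = w' i) \<Longrightarrow> D n k p w = D n k p w'"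
proof (induction n arbitrary: k p)
  case (Suc n)
  have w: "w (Suc k) = w' (Suc k)" using Suc.prems by auto
  have "D n (Suc k) q w = D n (Suc k) q w'" for q
    by (rule Suc.IH) (use Suc.prems in auto)
  then show ?case by (simp add: w)
qed simp

lemma D_meas:
  "{Suc k..k+n} \<subseteq> I \<Longrightarrow> (\<lambda>z. D n k (fst z) (snd z)) \<in> borel_measurable ((borel \<Otimes>\<^sub>M borel) \<Otimes>\<^sub>M PiM I (\<lambda>_. lborel))"
proof (induction n arbitrary: k)
  case 0
  show ?case by simp measurable
next
  case (Suc n)
  have kI: "Suc k \<in> I" using Suc.prems by auto
  have IH: "(\<lambda>z. D n (Suc k) (fst z) (snd z)) \<in> borel_measurable ((borel \<Otimes>\<^sub>M borel) \<Otimes>\<^sub>M PiM I (\<lambda>_. lborel))"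
    by (rule Suc.IH) (use Suc.prems in auto)
  have c[measurable]: "(\<lambda>z::(real\<times>real)\<times>(nat\<Rightarrow>real). snd z (Suc k)) \<in> borel_measurable ((borel \<Otimes>\<^sub>M borel) \<Otimes>\<^sub>M PiM I (\<lambda>_. lborel))"
    using measurable_compose[OF measurable_snd measurable_component_singleton[OF kI, of "\<lambda>_. lborel"]] by simp
  have m: "(\<lambda>z::(real\<times>real)\<times>(nat\<Rightarrow>real). ((snd z (Suc k), lamR (fst (fst z)) (snd (fst z)) (snd z (Suc k))), snd z))
     \<in> measurable ((borel \<Otimes>\<^sub>M borel) \<Otimes>\<^sub>M PiM I (\<lambda>_. lborel)) ((borel \<Otimes>\<^sub>M borel) \<Otimes>\<^sub>M PiM I (\<lambda>_. lborel))"
    by measurable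
  have [measurable]: "(\<lambda>z::(real\<times>real)\<times>(nat\<Rightarrow>real). D n (Suc k) (snd z (Suc k), lamR (fst (fst z)) (snd (fst z)) (snd z (Suc k))) (snd z))
     \<in> borel_measurable ((borel \<Otimes>\<^sub>M borel) \<Otimes>\<^sub>M PiM I (\<lambda>_. lborel))"
    using measurable_compose[OF m IH] by simp
  have [measurable]: "(\<lambda>z::(real\<times>real)\<times>(nat\<Rightarrow>real). indicator {fst (fst z)<..<\<sigma>} (snd z (Suc k)) :: ennreal)
     \<in> borel_measurable ((borel \<Otimes>\<^sub>M borel) \<Otimes>\<^sub>M PiM I (\<lambda>_. lborel))"
  proof -
    have "(\<lambda>z::(real\<times>real)\<times>(nat\<Rightarrow>real). indicator {fst (fst z)<..<\<sigma>} (snd z (Suc k)) :: ennreal)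
      = (\<lambda>z. if fst (fst z) < snd z (Suc k) \<and> snd z (Suc k) < \<sigma> then 1 else 0)"
      by (auto simp: indicator_def)
    then show ?thesis by simp
  qed
  show ?case unfolding D.simps by measurable
qed

end



context exc begin

lemma PS: "product_sigma_finite (\<lambda>_::nat. lborel)"
  by (simp add: product_sigma_finite_def sigma_finite_lborel)

lemma SF: "finite J \<Longrightarrow> sigma_finite_measure (PiM J (\<lambda>_::nat. lborel))"
  by (rule product_sigma_finite.sigma_finite[OF PS])

lemma cs_dead: "cs dead s i = dead"
  by (induction i) (simp_all add: dead_step)

lemma Lam_nonneg: "ok a L \<Longrightarrow> 0 \<le> LamR a L \<sigma>"
  using LamR_mono[of L a a \<sigma>] ok_bounds[of a L] by (simp add: LamR_self)

lemma emeasure_Exp_gt: "0 \<le> c \<Longrightarrow> emeasure Exp {x. c < x} = ennreal (exp (- c))"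
proof -
  assume c: "0 \<le> c"
  interpret E: prob_space Exp by (rule prob_Exp)
  have d: "distributed Exp lborel (\<lambda>x. x) (\<lambda>x. ennreal (exponential_density 1 x))"
    unfolding distributed_def
    by (auto simp: distr_id2 sets_Exp Exp_def)
  have "\<P>(x in Exp. c < x) = exp (- c * 1)"
    by (rule E.exponential_distributedD_gt[OF d c]) simp
  then show ?thesis by (simp add: E.emeasure_eq_measure space_Exp)
qed

lemma AE_Exp: "AE x in Exp. 0 < x \<and> x \<noteq> c"
proof -
  have "AE x in lborel. x \<noteq> 0" "AE x in lborel. x \<noteq> c" by (rule AE_lborel_singleton)+
  then have "AE x in lborel. 0 < ennreal (exponential_density 1 x) \<longrightarrow> 0 < x \<and> x \<noteq> c"
    by eventually_elim (auto simp: exponential_density_def)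
  then show ?thesis unfolding Exp_def by (subst AE_density) auto
qed

lemma main_claim:
  "good (fst p) (snd p) \<Longrightarrow> A \<in> sets (PiM {Suc k..k+n} (\<lambda>_. lborel)) \<Longrightarrow>
   emeasure (stream_space Exp) {s \<in> space (stream_space Exp). fst (cs p s n) \<le> \<sigma> \<and> \<not> fst (cs p s (Suc n)) \<le> \<sigma>
      \<and> (\<lambda>i\<in>{Suc k..k+n}. fst (cs p s (i - k))) \<in> A}
   = (\<integral>\<^sup>+w. indicator A w * D n k p w \<partial>PiM {Suc k..k+n} (\<lambda>_. lborel))"
proof (induction n arbitrary: k p A)
  case 0
  obtain a L where p: "p = (a, L)" by (cases p)
  have g: "good a L" using 0 p by simp
  have okk: "ok a L" using g by (simp add: good_def)
  have aS: "a \<le> \<sigma>" using ok_le[OF okk] .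
  interpret SS: prob_space "stream_space Exp" by (rule prob_S)
  interpret E: prob_space Exp by (rule prob_Exp)
  have emp: "{Suc k..k+0} = {}" by simp
  have st: "fst (stepT (a, L) x) \<le> \<sigma> \<longleftrightarrow> x \<le> LamR a L \<sigma>" for x
    using Tm_props(1)[OF okk, of x] okk sig by (auto simp: stepT_def)
  have res: "(\<lambda>i\<in>{Suc k..k+0}. fst (cs p s (i - k))) = (\<lambda>_. undefined)" for s
    by (auto simp: restrict_def)
  let ?U = "\<lambda>_::nat. undefined :: real"
  have seteq: "{s \<in> space (stream_space Exp). fst (cs p s 0) \<le> \<sigma> \<and> \<not> fst (cs p s (Suc 0)) \<le> \<sigma>
      \<and> (\<lambda>i\<in>{Suc k..k+0}. fst (cs p s (i - k))) \<in> A}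
      = (if ?U \<in> A then {s \<in> space (stream_space Exp). LamR a L \<sigma> < shd s} else {})"
    unfolding res using aS by (auto simp: p st not_le snth.simps(1)[symmetric] simp del: snth.simps)
  have X: "{s \<in> space (stream_space Exp). LamR a L \<sigma> < shd s} \<in> sets (stream_space Exp)" by measurable
  have "emeasure (stream_space Exp) {s \<in> space (stream_space Exp). LamR a L \<sigma> < shd s}
      = (\<integral>\<^sup>+t. emeasure (stream_space Exp) {x \<in> space (stream_space Exp). t ## x \<in> {s \<in> space (stream_space Exp). LamR a L \<sigma> < shd s}} \<partial>Exp)"
    by (rule E.emeasure_stream_space[OF X])
  also have "\<dots> = (\<integral>\<^sup>+t. indicator {x. LamR a L \<sigma> < x} t \<partial>Exp)"
    by (intro nn_integral_cong) (auto simp: space_S SS.emeasure_space_1[unfolded space_S] indicator_def)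
  also have "\<dots> = emeasure Exp {x. LamR a L \<sigma> < x}"
    by (rule nn_integral_indicator) (simp add: sets_Exp)
  also have "\<dots> = ennreal (exp (- LamR a L \<sigma>))" by (rule emeasure_Exp_gt[OF Lam_nonneg[OF okk]])
  finally have l: "emeasure (stream_space Exp) {s \<in> space (stream_space Exp). LamR a L \<sigma> < shd s} = ennreal (exp (- LamR a L \<sigma>))" .
  have r: "(\<integral>\<^sup>+w. indicator A w * D 0 k p w \<partial>PiM {Suc k..k+0} (\<lambda>_. lborel)) = indicator A ?U * ennreal (exp (- LamR a L \<sigma>))"
  proof -
    have one: "(\<integral>\<^sup>+w. g w \<partial>count_space {?U}) = g ?U" for g :: "(nat \<Rightarrow> real) \<Rightarrow> ennreal"
      by (simp add: nn_integral_count_space_finite)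
    show ?thesis unfolding emp PiM_empty one by (simp add: p)
  qed
  show ?case unfolding seteq r using l by (auto simp: indicator_def)
next
  case (Suc n k p A)
  obtain a L where p: "p = (a, L)" by (cases p)
  have g: "good a L" using Suc p by simp
  have okk: "ok a L" using g by (simp add: good_def)
  interpret SS: prob_space "stream_space Exp" by (rule prob_S)
  interpret E: prob_space Exp by (rule prob_Exp)
  define J where "J = {Suc (Suc k)..Suc k + n}"
  define I' where "I' = {Suc k..k + Suc n}"
  have IJ: "I' = insert (Suc k) J" "Suc k \<notin> J" "finite J" by (auto simp: I'_def J_def)
  have AI: "A \<in> sets (PiM I' (\<lambda>_. lborel))" using Suc.prems by (simp add: I'_def)
  let ?L = "LamR a L \<sigma>"
  define X where "X = {s \<in> space (stream_space Exp). fst (cs p s (Suc n)) \<le> \<sigma> \<and> \<not> fst (cs p s (Suc (Suc n))) \<le> \<sigma>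
      \<and> (\<lambda>i\<in>I'. fst (cs p s (i - k))) \<in> A}"
  have [measurable]: "(\<lambda>s. \<lambda>i\<in>I'. fst (cs p s (i - k))) \<in> measurable (stream_space Exp) (PiM I' (\<lambda>_. lborel))"
    by (rule measurable_restrict) simp
  have [measurable]: "A \<in> sets (PiM I' (\<lambda>_. lborel))" by (rule AI)
  have Xm: "X \<in> sets (stream_space Exp)" unfolding X_def by measurable
  define Psi where "Psi t = (\<integral>\<^sup>+w. indicator A (w(Suc k := t)) * D n (Suc k) (t, lamR a L t) w \<partial>PiM J (\<lambda>_. lborel))" for t
  have upd: "(\<lambda>z::real \<times> (nat \<Rightarrow> real). (snd z)(Suc k := fst z)) \<in> measurable (lborel \<Otimes>\<^sub>M PiM J (\<lambda>_. lborel)) (PiM I' (\<lambda>_. lborel))"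
  proof -
    have "(\<lambda>z::real \<times> (nat \<Rightarrow> real). (snd z, fst z)) \<in> measurable (lborel \<Otimes>\<^sub>M PiM J (\<lambda>_. lborel)) (PiM J (\<lambda>_. lborel) \<Otimes>\<^sub>M lborel)"
      by measurable
    from measurable_compose[OF this measurable_add_dim[of "Suc k" J "\<lambda>_. lborel"]] show ?thesis
      by (simp add: IJ(1))
  qed
  have Dn: "(\<lambda>z. D n (Suc k) (fst z) (snd z)) \<in> borel_measurable ((borel \<Otimes>\<^sub>M borel) \<Otimes>\<^sub>M PiM J (\<lambda>_. lborel))"
    by (rule D_meas) (simp add: J_def)
  have m2: "(\<lambda>z::real \<times> (nat \<Rightarrow> real). ((fst z, lamR a L (fst z)), snd z)) \<in> measurable (lborel \<Otimes>\<^sub>M PiM J (\<lambda>_. lborel)) ((borel \<Otimes>\<^sub>M borel) \<Otimes>\<^sub>M PiM J (\<lambda>_. lborel))"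
    by measurable
  have G[measurable]: "(\<lambda>z::real \<times> (nat \<Rightarrow> real). indicator A ((snd z)(Suc k := fst z)) * D n (Suc k) (fst z, lamR a L (fst z)) (snd z))
     \<in> borel_measurable (lborel \<Otimes>\<^sub>M PiM J (\<lambda>_. lborel))"
  proof -
    have [measurable]: "(\<lambda>z::real \<times> (nat \<Rightarrow> real). D n (Suc k) (fst z, lamR a L (fst z)) (snd z)) \<in> borel_measurable (lborel \<Otimes>\<^sub>M PiM J (\<lambda>_. lborel))"
      using measurable_compose[OF m2 Dn] by simp
    have [measurable]: "(\<lambda>z::real \<times> (nat \<Rightarrow> real). indicator A ((snd z)(Suc k := fst z)) :: ennreal) \<in> borel_measurable (lborel \<Otimes>\<^sub>M PiM J (\<lambda>_. lborel))"
      using measurable_compose[OF upd borel_measurable_indicator[OF AI]] by simp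
    show ?thesis by measurable
  qed
  have Psim: "Psi \<in> borel_measurable borel"
  proof -
    have "Psi \<in> borel_measurable lborel"
      unfolding Psi_def
      by (rule sigma_finite_measure.borel_measurable_nn_integral[OF SF[OF IJ(3)]]) (use G in simp)
    then show ?thesis by simp
  qed
  have inner: "emeasure (stream_space Exp) {s' \<in> space (stream_space Exp). x ## s' \<in> X} = Psi (Tm a L x)"
    if x: "0 < x" "x < ?L" for x
  proof -
    define T where "T = Tm a L x"
    define q where "q = (T, lamR a L T)"
    have stq: "stepT p x = q" using stepT_good(1)[OF g x] by (simp add: p q_def T_def)
    have gq: "good (fst q) (snd q)" using stepT_good(2)[OF g x] by (simp add: q_def T_def)
    define AT where "AT = {w \<in> space (PiM J (\<lambda>_. lborel)). w(Suc k := T) \<in> A}"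
    have updT: "(\<lambda>w. w(Suc k := T)) \<in> measurable (PiM J (\<lambda>_. lborel)) (PiM I' (\<lambda>_. lborel))"
    proof -
      have "(\<lambda>w. (w, T)) \<in> measurable (PiM J (\<lambda>_. lborel)) (PiM J (\<lambda>_. lborel) \<Otimes>\<^sub>M lborel)" by measurable
      from measurable_compose[OF this measurable_add_dim[of "Suc k" J "\<lambda>_. lborel"]] show ?thesis
        by (simp add: IJ(1))
    qed
    have ATm: "AT \<in> sets (PiM J (\<lambda>_. lborel))"
      unfolding AT_def using measurable_sets[OF updT AI] by (simp add: vimage_def Int_def conj_commute)
    have ATm': "AT \<in> sets (PiM {Suc (Suc k)..Suc k + n} (\<lambda>_. lborel))" using ATm by (simp add: J_def)
    have fun_eq: "(\<lambda>i\<in>I'. fst (cs p (x ## s') (i - k))) = (\<lambda>i\<in>J. fst (cs q s' (i - Suc k)))(Suc k := T)" for s'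
    proof
      fix i
      show "(\<lambda>i\<in>I'. fst (cs p (x ## s') (i - k))) i = ((\<lambda>i\<in>J. fst (cs q s' (i - Suc k)))(Suc k := T)) i"
      proof (cases "i = Suc k")
        case True
        then show ?thesis using stq by (simp add: I'_def q_def)
      next
        case False
        show ?thesis
        proof (cases "i \<in> J")
          case True
          then have "i - k = Suc (i - Suc k)" by (auto simp: J_def)
          then have "cs p (x ## s') (i - k) = cs q s' (i - Suc k)" by (simp only: cs_Cons stq)
          then show ?thesis using True False IJ(1) by simp
        next
          case False
          then show ?thesis using \<open>i \<noteq> Suc k\<close> IJ(1) by simp
        qed
      qed
    qed
    have inJ: "(\<lambda>i\<in>J. fst (cs q s' (i - Suc k))) \<in> space (PiM J (\<lambda>_. lborel))" for s'
      by (simp add: space_PiM)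
    have seteq: "{s' \<in> space (stream_space Exp). x ## s' \<in> X} =
      {s \<in> space (stream_space Exp). fst (cs q s n) \<le> \<sigma> \<and> \<not> fst (cs q s (Suc n)) \<le> \<sigma>
        \<and> (\<lambda>i\<in>{Suc (Suc k)..Suc k + n}. fst (cs q s (i - Suc k))) \<in> AT}"
    proof -
      have c1: "cs p (x ## s') (Suc n) = cs q s' n" "cs p (x ## s') (Suc (Suc n)) = cs q s' (Suc n)" for s'
        by (simp only: cs_Cons stq)+
      show ?thesis
        unfolding X_def AT_def using inJ by (auto simp: space_S c1 fun_eq J_def simp del: cs.simps)
    qed
    have "emeasure (stream_space Exp) {s' \<in> space (stream_space Exp). x ## s' \<in> X}
        = (\<integral>\<^sup>+w. indicator AT w * D n (Suc k) q w \<partial>PiM {Suc (Suc k)..Suc k + n} (\<lambda>_. lborel))"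
      unfolding seteq by (rule Suc.IH[OF gq ATm'])
    also have "\<dots> = Psi T"
      unfolding Psi_def J_def[symmetric]
      by (intro nn_integral_cong) (auto simp: AT_def q_def indicator_def)
    finally show ?thesis by (simp add: T_def)
  qed
  have inner0: "emeasure (stream_space Exp) {s' \<in> space (stream_space Exp). x ## s' \<in> X} = 0"
    if x: "?L < x" for x
  proof -
    have "stepT p x = dead" using stepT_dead[OF okk x] by (simp add: p)
    then have c1: "cs p (x ## s') (Suc n) = dead" for s' by (simp only: cs_Cons cs_dead)
    then have E0: "{s' \<in> space (stream_space Exp). x ## s' \<in> X} = {}"
      unfolding X_def using sig by (auto simp del: cs.simps)
    show ?thesis unfolding E0 by simp
  qed
  have "emeasure (stream_space Exp) X = (\<integral>\<^sup>+x. emeasure (stream_space Exp) {s' \<in> space (stream_space Exp). x ## s' \<in> X} \<partial>Exp)"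
    by (rule E.emeasure_stream_space[OF Xm])
  also have "\<dots> = (\<integral>\<^sup>+x. (if 0 < x \<and> x < ?L then Psi (Tm a L x) else 0) \<partial>Exp)"
  proof (rule nn_integral_cong_AE)
    show "AE x in Exp. emeasure (stream_space Exp) {s' \<in> space (stream_space Exp). x ## s' \<in> X}
        = (if 0 < x \<and> x < ?L then Psi (Tm a L x) else 0)"
      using AE_Exp[of ?L]
    proof eventually_elim
      case (elim x)
      then show ?case using inner[of x] inner0[of x] by (cases "x < ?L") auto
    qed
  qed
  also have "\<dots> = (\<integral>\<^sup>+t. indicator {a<..<\<sigma>} t * ennreal (lamR a L t * exp (- LamR a L t)) * Psi t \<partial>lborel)"
    by (rule subst_step[OF g Psim])
  also have "\<dots> = (\<integral>\<^sup>+w. indicator A w * D (Suc n) k p w \<partial>PiM I' (\<lambda>_. lborel))"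
  proof -
    have mI: "(\<lambda>w. indicator A w * D (Suc n) k p w) \<in> borel_measurable (PiM (insert (Suc k) J) (\<lambda>_. lborel))"
    proof -
      have Dm: "(\<lambda>z. D (Suc n) k (fst z) (snd z)) \<in> borel_measurable ((borel \<Otimes>\<^sub>M borel) \<Otimes>\<^sub>M PiM (insert (Suc k) J) (\<lambda>_. lborel))"
        by (rule D_meas) (auto simp: J_def)
      have "(\<lambda>w. (p, w)) \<in> measurable (PiM (insert (Suc k) J) (\<lambda>_. lborel)) ((borel \<Otimes>\<^sub>M borel) \<Otimes>\<^sub>M PiM (insert (Suc k) J) (\<lambda>_. lborel))"
        by (intro measurable_Pair measurable_const measurable_ident_sets) (auto simp: space_pair_measure)
      from measurable_compose[OF this Dm] have [measurable]: "D (Suc n) k p \<in> borel_measurable (PiM (insert (Suc k) J) (\<lambda>_. lborel))"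
        by (simp only: fst_conv snd_conv)
      have [measurable]: "A \<in> sets (PiM (insert (Suc k) J) (\<lambda>_. lborel))" using AI IJ(1) by simp
      show ?thesis by measurable
    qed
    have "(\<integral>\<^sup>+w. indicator A w * D (Suc n) k p w \<partial>PiM I' (\<lambda>_. lborel))
        = (\<integral>\<^sup>+t. \<integral>\<^sup>+w. indicator A (w(Suc k := t)) * D (Suc n) k p (w(Suc k := t)) \<partial>PiM J (\<lambda>_. lborel) \<partial>lborel)"
      unfolding IJ(1) by (rule product_sigma_finite.product_nn_integral_insert_rev[OF PS IJ(3) IJ(2) mI])
    also have "\<dots> = (\<integral>\<^sup>+t. indicator {a<..<\<sigma>} t * ennreal (lamR a L t * exp (- LamR a L t)) * Psi t \<partial>lborel)"
    proof (rule nn_integral_cong)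
      fix t :: real
      have Gt: "(\<lambda>w. indicator A (w(Suc k := t)) * D n (Suc k) (t, lamR a L t) w) \<in> borel_measurable (PiM J (\<lambda>_. lborel))"
        using measurable_Pair2[OF G, of t] by simp
      have loc: "D n (Suc k) (t, lamR a L t) (w(Suc k := t)) = D n (Suc k) (t, lamR a L t) w" for w
        by (rule D_local) auto
      have "(\<integral>\<^sup>+w. indicator A (w(Suc k := t)) * D (Suc n) k p (w(Suc k := t)) \<partial>PiM J (\<lambda>_. lborel))
          = (\<integral>\<^sup>+w. (indicator {a<..<\<sigma>} t * ennreal (lamR a L t * exp (- LamR a L t))) *
               (indicator A (w(Suc k := t)) * D n (Suc k) (t, lamR a L t) w) \<partial>PiM J (\<lambda>_. lborel))"
        by (intro nn_integral_cong) (simp add: p loc mult_ac)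
      also have "\<dots> = indicator {a<..<\<sigma>} t * ennreal (lamR a L t * exp (- LamR a L t)) * Psi t"
        unfolding Psi_def by (rule nn_integral_cmult[OF Gt])
      finally show "(\<integral>\<^sup>+w. indicator A (w(Suc k := t)) * D (Suc n) k p (w(Suc k := t)) \<partial>PiM J (\<lambda>_. lborel))
          = indicator {a<..<\<sigma>} t * ennreal (lamR a L t * exp (- LamR a L t)) * Psi t" .
    qed
    finally show ?thesis by simp
  qed
  finally show ?case by (simp only: X_def I'_def)
qed

end



context exc begin

lemma ot_mono: "t \<in> ordered_times \<sigma> n \<Longrightarrow> 1 \<le> i \<Longrightarrow> i < j \<Longrightarrow> j \<le> n \<Longrightarrow> t i < t j"
proof (induction j)
  case (Suc j)
  have step: "t j < t (Suc j)" using Suc.prems by (auto simp: ordered_times_def)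
  show ?case
  proof (cases "i = j")
    case True then show ?thesis using step by simp
  next
    case False then show ?thesis using Suc step by auto
  qed
qed simp

lemma ot_range: "t \<in> ordered_times \<sigma> n \<Longrightarrow> i \<in> {1..n} \<Longrightarrow> 0 < t i \<and> t i < \<sigma>"
  by (auto simp: ordered_times_def)

lemma tt_mono: "t \<in> ordered_times \<sigma> n \<Longrightarrow> i < j \<Longrightarrow> j \<le> n \<Longrightarrow> tt t i < tt t j"
  using ot_mono[of t n i j] ot_range[of t n j] by (cases "i = 0") (auto simp: tt_def)

lemma tt_le: "t \<in> ordered_times \<sigma> n \<Longrightarrow> i \<le> j \<Longrightarrow> j \<le> n \<Longrightarrow> tt t i \<le> tt t j"
  using tt_mono[of t n i j] by (cases "i = j") auto

lemma tt_range: "t \<in> ordered_times \<sigma> n \<Longrightarrow> i \<le> n \<Longrightarrow> 0 \<le> tt t i \<and> tt t i < \<sigma>"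
  using ot_range[of t n i] sig by (auto simp: tt_def)

lemma Ifun_eq:
  assumes ord: "t \<in> ordered_times \<sigma> n" and m: "m \<le> n" and x1: "tt t m < x" and x2: "m < n \<Longrightarrow> x \<le> t (Suc m)"
  shows "Ifun t n x = m"
proof -
  have "{i \<in> {1..n}. t i < x} = {1..m}"
  proof (intro set_eqI iffI)
    fix i assume i: "i \<in> {1..m}"
    then have "tt t i \<le> tt t m" using tt_le[OF ord, of i m] m by auto
    then show "i \<in> {i \<in> {1..n}. t i < x}" using i x1 m by (auto simp: tt_def)
  next
    fix i assume i: "i \<in> {i \<in> {1..n}. t i < x}"
    show "i \<in> {1..m}"
    proof (rule ccontr)
      assume "i \<notin> {1..m}"
      then have mi: "m < i" "i \<le> n" using i by auto
      then have "tt t (Suc m) \<le> tt t i" using tt_le[OF ord, of "Suc m" i] by auto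
      then show False using x2 mi i by (auto simp: tt_def)
    qed
  qed
  then have "{0} \<union> {i \<in> {1..n}. t i < x} = insert 0 {1..m}" by simp
  moreover have "Max (insert 0 {1..m}) = m"
    by (rule Max_eqI) auto
  ultimately show ?thesis by (simp add: Ifun_def)
qed

definition Lsum :: "(nat \<Rightarrow> real) \<Rightarrow> nat \<Rightarrow> real" where
  "Lsum t j = (\<Sum>i=1..j. incr f t i)"

definition gI :: "(nat \<Rightarrow> real) \<Rightarrow> nat \<Rightarrow> real \<Rightarrow> real" where
  "gI t n x = f x - fhat f (tt t (Ifun t n x)) x + (\<Sum>i=1..Ifun t n x. incr f t i)"

lemma incr_eq: "t \<in> ordered_times \<sigma> n \<Longrightarrow> i \<in> {1..n} \<Longrightarrow> incr f t i = fR (tt t i) - hR (tt t (i - 1)) (tt t i)"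
proof -
  assume a: "t \<in> ordered_times \<sigma> n" "i \<in> {1..n}"
  have "i \<le> n" "i - 1 \<le> n" using a(2) by auto
  then have r1: "tt t i \<in> {0..\<sigma>}" "tt t (i - 1) \<in> {0..\<sigma>}" using tt_range[OF a(1), of i] tt_range[OF a(1), of "i - 1"] by auto
  show ?thesis unfolding incr_def using fR_eq[OF r1(1)] hR_eq[OF r1(2) r1(1)] by simp
qed

lemma incr_nonneg: "t \<in> ordered_times \<sigma> n \<Longrightarrow> i \<in> {1..n} \<Longrightarrow> 0 \<le> incr f t i"
  using incr_eq[of t n i] hR_le_f[of "tt t (i - 1)" "tt t i"] by simp

lemma Lsum_nonneg: "t \<in> ordered_times \<sigma> n \<Longrightarrow> j \<le> n \<Longrightarrow> 0 \<le> Lsum t j"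
  unfolding Lsum_def by (rule sum_nonneg) (auto intro: incr_nonneg)

lemma lamR_Lsum: "t \<in> ordered_times \<sigma> n \<Longrightarrow> m < n \<Longrightarrow> lamR (tt t m) (Lsum t m) (t (Suc m)) = Lsum t (Suc m)"
  using incr_eq[of t n "Suc m"] by (simp add: Lsum_def lamR_def tt_def)

lemma gI_eq:
  assumes ord: "t \<in> ordered_times \<sigma> n" and m: "m \<le> n" and x1: "tt t m < x" and x3: "x \<le> \<sigma>"
    and x2: "m < n \<Longrightarrow> x \<le> t (Suc m)"
  shows "gI t n x = lamR (tt t m) (Lsum t m) x"
proof -
  have I: "Ifun t n x = m" by (rule Ifun_eq[OF ord m x1 x2])
  have r: "0 \<le> tt t m" "tt t m \<le> \<sigma>" using tt_range[OF ord m] by auto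
  then have "x \<in> {0..\<sigma>}" using x1 x3 by auto
  then show ?thesis using r by (simp add: gI_def I lamR_def Lsum_def fR_eq hR_eq)
qed

lemma D_closed:
  assumes ord: "t \<in> ordered_times \<sigma> n"
  shows "m + d = n \<Longrightarrow> gI t n integrable_on {tt t m..\<sigma>} \<and>
     D d m (tt t m, Lsum t m) t = ennreal ((\<Prod>j\<in>{m<..n}. Lsum t j) * exp (- integral {tt t m..\<sigma>} (gI t n)))"
proof (induction d arbitrary: m)
  case 0
  then have m: "m = n" by simp
  have eqs: "\<And>x. x \<in> {tt t m..\<sigma>} - {tt t m} \<Longrightarrow> gI t n x = lamR (tt t m) (Lsum t m) x"
    using gI_eq[OF ord, of m] m by auto
  have int: "gI t n integrable_on {tt t m..\<sigma>}"
    by (rule integrable_spike[OF lamR_integrable_on negligible_sing eqs])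
  have "integral {tt t m..\<sigma>} (lamR (tt t m) (Lsum t m)) = integral {tt t m..\<sigma>} (gI t n)"
    by (rule integral_spike[OF negligible_sing eqs])
  then show ?case using int m by (simp add: LamR_def)
next
  case (Suc d)
  have mn: "m < n" using Suc.prems by simp
  define a where "a = tt t m"
  define b where "b = t (Suc m)"
  define L where "L = Lsum t m"
  have bt: "b = tt t (Suc m)" by (simp add: b_def tt_def)
  have ab: "a < b" using tt_mono[OF ord, of m "Suc m"] mn by (simp add: a_def bt)
  have bs: "b < \<sigma>" using tt_range[OF ord, of "Suc m"] mn by (simp add: bt)
  have IH: "gI t n integrable_on {b..\<sigma>} \<and>
     D d (Suc m) (b, Lsum t (Suc m)) t = ennreal ((\<Prod>j\<in>{Suc m<..n}. Lsum t j) * exp (- integral {b..\<sigma>} (gI t n)))"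
    using Suc.IH[of "Suc m"] Suc.prems by (simp add: bt)
  have eqs: "\<And>x. x \<in> {a..b} - {a} \<Longrightarrow> gI t n x = lamR a L x"
    using gI_eq[OF ord, of m] mn bs by (auto simp: a_def b_def L_def)
  have int1: "gI t n integrable_on {a..b}"
    by (rule integrable_spike[OF lamR_integrable_on negligible_sing eqs])
  have i1: "integral {a..b} (gI t n) = LamR a L b"
    unfolding LamR_def by (rule integral_spike[OF negligible_sing eqs, symmetric])
  have int: "gI t n integrable_on {a..\<sigma>}"
    by (rule Henstock_Kurzweil_Integration.integrable_combine[where a=a and c=b and b=\<sigma>]) (use ab bs int1 IH in auto)
  have comb: "integral {a..b} (gI t n) + integral {b..\<sigma>} (gI t n) = integral {a..\<sigma>} (gI t n)"
    by (rule Henstock_Kurzweil_Integration.integral_combine) (use ab bs int in auto)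
  have lamb: "lamR a L b = Lsum t (Suc m)" using lamR_Lsum[OF ord mn] by (simp add: a_def L_def b_def)
  have P0: "0 \<le> (\<Prod>j\<in>{Suc m<..n}. Lsum t j)" by (rule prod_nonneg) (auto intro: Lsum_nonneg[OF ord])
  have L1: "0 \<le> Lsum t (Suc m)" using Lsum_nonneg[OF ord, of "Suc m"] mn by simp
  have prod: "(\<Prod>j\<in>{m<..n}. Lsum t j) = Lsum t (Suc m) * (\<Prod>j\<in>{Suc m<..n}. Lsum t j)"
  proof -
    have "{m<..n} = insert (Suc m) {Suc m<..n}" using mn by auto
    then show ?thesis by simp
  qed
  have "D (Suc d) m (a, L) t = ennreal (Lsum t (Suc m) * exp (- LamR a L b)) *
      ennreal ((\<Prod>j\<in>{Suc m<..n}. Lsum t j) * exp (- integral {b..\<sigma>} (gI t n)))"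
    using ab bs IH by (simp add: b_def[symmetric] lamb)
  also have "\<dots> = ennreal ((\<Prod>j\<in>{m<..n}. Lsum t j) * exp (- integral {a..\<sigma>} (gI t n)))"
    using P0 L1 comb i1
    by (simp add: ennreal_mult[symmetric] prod exp_add[symmetric] mult_ac algebra_simps)
  finally show ?case using int by (simp add: a_def L_def)
qed

lemma D_bi: "t \<in> ordered_times \<sigma> n \<Longrightarrow> D n 0 (0, 0) t = ennreal (bi_density f \<sigma> n t)"
proof -
  assume ord: "t \<in> ordered_times \<sigma> n"
  have "D n 0 (tt t 0, Lsum t 0) t = ennreal ((\<Prod>j\<in>{0<..n}. Lsum t j) * exp (- integral {tt t 0..\<sigma>} (gI t n)))"
    using D_closed[OF ord, of 0 n] by simp
  moreover have "{0<..n} = {1..n}" by auto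
  ultimately show ?thesis
    by (simp add: bi_density_def tt_def Lsum_def gI_def[abs_def])
qed

lemma D_nonzero: "D d m (a, L) t \<noteq> 0 \<Longrightarrow> (0 < d \<longrightarrow> a < t (Suc m)) \<and> (\<forall>i. Suc m \<le> i \<and> i \<le> m + d \<longrightarrow> t i < \<sigma>)
   \<and> (\<forall>i. Suc m \<le> i \<and> i < m + d \<longrightarrow> t i < t (Suc i))"
proof (induction d arbitrary: m a L)
  case (Suc d)
  have ind: "a < t (Suc m)" "t (Suc m) < \<sigma>" using Suc.prems by (auto split: split_indicator_asm)
  have "D d (Suc m) (t (Suc m), lamR a L (t (Suc m))) t \<noteq> 0" using Suc.prems by auto
  note IH = Suc.IH[OF this]
  show ?case
  proof (intro conjI allI impI)
    fix i assume "Suc m \<le> i \<and> i \<le> m + Suc d"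
    then show "t i < \<sigma>" using IH ind by (cases "i = Suc m") auto
  next
    fix i assume i: "Suc m \<le> i \<and> i < m + Suc d"
    show "t i < t (Suc i)"
    proof (cases "i = Suc m")
      case True then show ?thesis using IH i by auto
    next
      case False then show ?thesis using IH i by auto
    qed
  qed (use ind in auto)
qed simp

lemma D_zero: "t \<notin> ordered_times \<sigma> n \<Longrightarrow> D n 0 (0, 0) t = 0"
proof (rule ccontr)
  assume nt: "t \<notin> ordered_times \<sigma> n" and "D n 0 (0, 0) t \<noteq> 0"
  note H = D_nonzero[OF this(2)]
  have pos: "i \<in> {1..n} \<Longrightarrow> 0 < t i" for i
  proof (induction i)
    case (Suc i)
    show ?case
    proof (cases "i = 0")
      case True then show ?thesis using H Suc.prems by auto
    next
      case False
      then have "0 < t i" using Suc by auto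
      moreover have "t i < t (Suc i)" using H False Suc.prems by auto
      ultimately show ?thesis by simp
    qed
  qed simp
  have "t \<in> ordered_times \<sigma> n" using H pos by (auto simp: ordered_times_def)
  then show False using nt by simp
qed

lemma density_eq: "indicator A t * D n 0 (0, 0) t = indicator (A \<inter> ordered_times \<sigma> n) t * ennreal (bi_density f \<sigma> n t)"
  by (cases "t \<in> ordered_times \<sigma> n") (auto simp: D_bi D_zero indicator_def)

end



context exc begin

lemma lamR_le: "fR x \<le> B \<Longrightarrow> lamR a L x \<le> L + B"
  using hR_nonneg[of a x] by (simp add: lamR_def)

lemma LamR_upper:
  assumes B: "\<And>x. fR x \<le> B" and at: "a \<le> T"
  shows "LamR a L T \<le> (L + B) * (T - a)"
proof -
  have "LamR a L T \<le> integral {a..T} (\<lambda>x. L + B)"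
    unfolding LamR_def by (rule integral_le[OF lamR_integrable_on]) (auto intro: lamR_le B)
  also have "\<dots> = (L + B) * (T - a)" using at by simp
  finally show ?thesis .
qed

lemma never_bound:
  assumes B: "\<And>x. fR x \<le> B" "0 < B"
  shows "fst (cs (0, 0) s i) \<le> \<sigma> \<Longrightarrow> snd (cs (0, 0) s i) \<le> real i * B \<and> (\<Sum>j<i. s !! j / (real j + 1)) \<le> B * fst (cs (0, 0) s i)"
proof (induction i)
  case 0 then show ?case by simp
next
  case (Suc i)
  have ok0: "ok (fst (0::real, 0::real)) (snd (0::real, 0::real))" by (simp add: ok_def)
  have al: "fst (cs (0, 0) s i) \<le> \<sigma>" using alive_mono[OF ok0, of i "Suc i" s] Suc.prems by simp
  note IH = Suc.IH[OF al]
  obtain a L where q: "cs (0, 0) s i = (a, L)" by (cases "cs (0, 0) s i")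
  have okq: "ok a L" using alive_iff[OF ok0, of s i] al q by simp
  define x where "x = s !! i"
  have C: "x \<le> LamR a L \<sigma>"
  proof (rule ccontr)
    assume "\<not> x \<le> LamR a L \<sigma>"
    then have "cs (0, 0) s (Suc i) = dead" using q okq by (simp add: stepT_def x_def)
    then show False using Suc.prems sig by simp
  qed
  define T where "T = Tm a L x"
  have st: "cs (0, 0) s (Suc i) = (T, lamR a L T)" using q okq C by (simp add: stepT_def x_def T_def)
  have T: "T \<in> {a..\<sigma>}" "x \<le> LamR a L T" using Tm_props(1,2)[OF okq C] by (auto simp: T_def)
  have L0: "0 \<le> L" using ok_bounds[OF okq] by simp
  have Li: "L \<le> real i * B" using IH q by simp
  have "x \<le> (L + B) * (T - a)" using T LamR_upper[OF B(1), of a T L] by auto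
  also have "\<dots> \<le> (real i * B + B) * (T - a)" using Li T by (intro mult_right_mono) auto
  finally have xb: "x \<le> (real i + 1) * B * (T - a)" by (simp add: algebra_simps)
  then have xb': "x / (real i + 1) \<le> B * (T - a)" by (simp add: divide_le_eq mult_ac)
  have "(\<Sum>j<Suc i. s !! j / (real j + 1)) = (\<Sum>j<i. s !! j / (real j + 1)) + x / (real i + 1)"
    by (simp add: x_def)
  also have "\<dots> \<le> B * a + B * (T - a)" using IH q xb' by (intro add_mono) auto
  also have "\<dots> = B * T" by (simp add: algebra_simps)
  finally have s1: "(\<Sum>j<Suc i. s !! j / (real j + 1)) \<le> B * fst (cs (0, 0) s (Suc i))" using st by simp
  have "lamR a L T \<le> L + B" by (rule lamR_le[OF B(1)])
  then have "snd (cs (0, 0) s (Suc i)) \<le> real (Suc i) * B" using st Li by (simp add: algebra_simps)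
  then show ?case using s1 by simp
qed

lemma int_exp_Exp: "0 < c \<Longrightarrow> (\<integral>\<^sup>+x. ennreal (exp (- x / c)) \<partial>Exp) = ennreal (c / (c + 1))"
proof -
  assume c: "0 < c"
  define l where "l = 1 + 1 / c"
  have l: "0 < l" using c by (simp add: l_def add_pos_pos)
  have "(\<integral>\<^sup>+x. ennreal (exp (- x / c)) \<partial>Exp) = (\<integral>\<^sup>+x. ennreal (exponential_density 1 x) * ennreal (exp (- x / c)) \<partial>lborel)"
    unfolding Exp_def by (rule nn_integral_density) measurable
  also have "\<dots> = (\<integral>\<^sup>+x. ennreal (1 / l) * ennreal (exponential_density l x) \<partial>lborel)"
  proof (rule nn_integral_cong)
    fix x :: real
    show "ennreal (exponential_density 1 x) * ennreal (exp (- x / c)) = ennreal (1 / l) * ennreal (exponential_density l x)"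
    proof (cases "x < 0")
      case False
      have "- x * l = (- x) + (- x / c)" by (simp add: l_def algebra_simps)
      then have "exp (- x * l) = exp (- x) * exp (- x / c)" by (simp only: exp_add)
      then have "exp (- x) * exp (- x / c) = 1 / l * (l * exp (- x * l))"
        using l by simp
      then show ?thesis using False l
        by (simp add: exponential_density_def ennreal_mult[symmetric])
    qed (simp add: exponential_density_def)
  qed
  also have "\<dots> = ennreal (1 / l) * (\<integral>\<^sup>+x. ennreal (exponential_density l x) \<partial>lborel)"
    by (rule nn_integral_cmult) measurable
  also have "(\<integral>\<^sup>+x. ennreal (exponential_density l x) \<partial>lborel) = 1"
  proof -
    interpret P: prob_space "density lborel (\<lambda>x. ennreal (exponential_density l x))"
      by (rule prob_space_exponential_density[OF l])
    have "emeasure (density lborel (\<lambda>x. ennreal (exponential_density l x))) UNIV = 1"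
      using P.emeasure_space_1 by simp
    then show ?thesis by (simp add: emeasure_density)
  qed
  also have "1 / l = c / (c + 1)" using c by (simp add: l_def field_simps)
  finally show ?thesis by simp
qed

lemma exp_moment: "0 < c \<Longrightarrow> (\<integral>\<^sup>+s. ennreal (exp (- (\<Sum>j<i. s !! j / (real j + c)))) \<partial>stream_space Exp) = ennreal (c / (c + real i))"
proof (induction i arbitrary: c)
  case 0
  interpret SS: prob_space "stream_space Exp" by (rule prob_S)
  show ?case using 0 by (simp add: SS.emeasure_space_1)
next
  case (Suc i)
  interpret E: prob_space Exp by (rule prob_Exp)
  have c: "0 < c" by fact
  have m: "(\<lambda>s. ennreal (exp (- (\<Sum>j<Suc i. s !! j / (real j + c))))) \<in> borel_measurable (stream_space Exp)"
    by measurable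
  have "(\<integral>\<^sup>+s. ennreal (exp (- (\<Sum>j<Suc i. s !! j / (real j + c)))) \<partial>stream_space Exp)
    = (\<integral>\<^sup>+x. \<integral>\<^sup>+s. ennreal (exp (- (\<Sum>j<Suc i. (x ## s) !! j / (real j + c)))) \<partial>stream_space Exp \<partial>Exp)"
    by (rule E.nn_integral_stream_space[OF m])
  also have "\<dots> = (\<integral>\<^sup>+x. ennreal (exp (- x / c)) * \<integral>\<^sup>+s. ennreal (exp (- (\<Sum>j<i. s !! j / (real j + (c + 1))))) \<partial>stream_space Exp \<partial>Exp)"
  proof (rule nn_integral_cong)
    fix x
    have e: "(\<Sum>j<Suc i. (x ## s) !! j / (real j + c)) = x / c + (\<Sum>j<i. s !! j / (real j + (c + 1)))" for s
      by (subst sum.lessThan_Suc_shift) (simp add: add_ac)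
    have "(\<integral>\<^sup>+s. ennreal (exp (- (\<Sum>j<Suc i. (x ## s) !! j / (real j + c)))) \<partial>stream_space Exp)
        = (\<integral>\<^sup>+s. ennreal (exp (- x / c)) * ennreal (exp (- (\<Sum>j<i. s !! j / (real j + (c + 1))))) \<partial>stream_space Exp)"
    proof (intro nn_integral_cong)
      fix s
      have "- (\<Sum>j<Suc i. (x ## s) !! j / (real j + c)) = (- x / c) + (- (\<Sum>j<i. s !! j / (real j + (c + 1))))"
        unfolding e by simp
      then have "exp (- (\<Sum>j<Suc i. (x ## s) !! j / (real j + c))) = exp (- x / c) * exp (- (\<Sum>j<i. s !! j / (real j + (c + 1))))"
        by (simp only: exp_add)
      then show "ennreal (exp (- (\<Sum>j<Suc i. (x ## s) !! j / (real j + c)))) = ennreal (exp (- x / c)) * ennreal (exp (- (\<Sum>j<i. s !! j / (real j + (c + 1)))))"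
        by (simp add: ennreal_mult)
    qed
    also have "\<dots> = ennreal (exp (- x / c)) * \<integral>\<^sup>+s. ennreal (exp (- (\<Sum>j<i. s !! j / (real j + (c + 1))))) \<partial>stream_space Exp"
      by (rule nn_integral_cmult) measurable
    finally show "(\<integral>\<^sup>+s. ennreal (exp (- (\<Sum>j<Suc i. (x ## s) !! j / (real j + c)))) \<partial>stream_space Exp)
        = ennreal (exp (- x / c)) * \<integral>\<^sup>+s. ennreal (exp (- (\<Sum>j<i. s !! j / (real j + (c + 1))))) \<partial>stream_space Exp" .
  qed
  also have "\<dots> = (\<integral>\<^sup>+x. ennreal (exp (- x / c)) * ennreal ((c + 1) / (c + 1 + real i)) \<partial>Exp)"
    using Suc.IH[of "c + 1"] c by simp
  also have "\<dots> = (\<integral>\<^sup>+x. ennreal (exp (- x / c)) \<partial>Exp) * ennreal ((c + 1) / (c + 1 + real i))"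
    by (rule nn_integral_multc) measurable
  also have "\<dots> = ennreal (c / (c + 1)) * ennreal ((c + 1) / (c + 1 + real i))"
    using int_exp_Exp[OF c] by simp
  also have "\<dots> = ennreal (c / (c + real (Suc i)))"
  proof -
    have pos: "0 < c + 1 + real i" "0 < c + 1" using c by auto
    have "c / (c + 1) * ((c + 1) / (c + 1 + real i)) = (c * (c + 1)) / ((c + 1 + real i) * (c + 1))"
      by (simp add: times_divide_times_eq mult.commute)
    also have "\<dots> = c / (c + 1 + real i)"
      by (rule nonzero_mult_divide_mult_cancel_right) (use pos in simp)
    finally have "c / (c + 1) * ((c + 1) / (c + 1 + real i)) = c / (c + 1 + real i)" .
    moreover have "c + real (Suc i) = c + 1 + real i" by simp
    ultimately show ?thesis using c pos by (simp add: ennreal_mult[symmetric])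
  qed
  finally show ?case .
qed

definition Nd :: "real stream set" where
  "Nd = {s \<in> space (stream_space Exp). \<forall>i. fst (cs (0, 0) s i) \<le> \<sigma>}"

lemma Nd_sets: "Nd \<in> sets (stream_space Exp)"
  unfolding Nd_def by measurable

lemma Nd_null: "Nd \<in> null_sets (stream_space Exp)"
proof -
  obtain B where B: "0 < B" "\<And>x. fR x \<le> B" using fR_bounded by metis
  define C where "C = exp (B * \<sigma>)"
  have C: "0 < C" by (simp add: C_def)
  have bound: "emeasure (stream_space Exp) Nd \<le> ennreal (C / (1 + real i))" for i
  proof -
    have "emeasure (stream_space Exp) Nd = (\<integral>\<^sup>+s. indicator Nd s \<partial>stream_space Exp)"
      by (simp add: Nd_sets)
    also have "\<dots> \<le> (\<integral>\<^sup>+s. ennreal C * ennreal (exp (- (\<Sum>j<i. s !! j / (real j + 1)))) \<partial>stream_space Exp)"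
    proof (rule nn_integral_mono)
      fix s
      show "indicator Nd s \<le> ennreal C * ennreal (exp (- (\<Sum>j<i. s !! j / (real j + 1))))"
      proof (cases "s \<in> Nd")
        case True
        then have "(\<Sum>j<i. s !! j / (real j + 1)) \<le> B * fst (cs (0, 0) s i)" "fst (cs (0, 0) s i) \<le> \<sigma>"
          using never_bound[OF B(2) B(1), of s i] by (auto simp: Nd_def)
        then have "(\<Sum>j<i. s !! j / (real j + 1)) \<le> B * \<sigma>" using B(1)
          by (meson mult_left_mono less_imp_le order.trans)
        then have "1 \<le> C * exp (- (\<Sum>j<i. s !! j / (real j + 1)))"
          by (simp add: C_def exp_minus[symmetric] exp_add[symmetric] one_le_exp_iff) 
        then have "ennreal 1 \<le> ennreal (C * exp (- (\<Sum>j<i. s !! j / (real j + 1))))"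
          by (rule ennreal_leI)
        then show ?thesis using True C by (simp add: ennreal_mult[symmetric])
      qed simp
    qed
    also have "\<dots> = ennreal C * (\<integral>\<^sup>+s. ennreal (exp (- (\<Sum>j<i. s !! j / (real j + 1)))) \<partial>stream_space Exp)"
      by (rule nn_integral_cmult) measurable
    also have "\<dots> = ennreal C * ennreal (1 / (1 + real i))" using exp_moment[of 1 i] by simp
    also have "\<dots> = ennreal (C / (1 + real i))" using C by (simp add: ennreal_mult[symmetric])
    finally show ?thesis .
  qed
  have "emeasure (stream_space Exp) Nd = 0"
  proof (rule ccontr)
    assume ne: "emeasure (stream_space Exp) Nd \<noteq> 0"
    have fin: "emeasure (stream_space Exp) Nd \<noteq> \<infinity>" using bound[of 0] by (auto simp: top_unique)
    define r where "r = enn2real (emeasure (stream_space Exp) Nd)"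
    have er: "emeasure (stream_space Exp) Nd = ennreal r" using fin by (simp add: r_def ennreal_enn2real_if)
    have "r \<noteq> 0" using ne er by auto
    moreover have "0 \<le> r" unfolding r_def by simp
    ultimately have r0: "0 < r" by simp
    obtain i :: nat where i: "C / r < real i" using reals_Archimedean2 by blast
    have "ennreal r \<le> ennreal (C / (1 + real i))" using bound[of i] unfolding er .
    then have "r \<le> C / (1 + real i)" using C by (simp add: ennreal_le_iff)
    then have "r * (1 + real i) \<le> C" by (simp add: le_divide_eq add_pos_nonneg)
    moreover have "C < r * real i" using i r0 by (simp add: divide_less_eq mult.commute)
    ultimately show False using r0 by (simp add: algebra_simps)
  qed
  then show ?thesis using Nd_sets by (simp add: null_sets_def)
qed

end



context exc begin

lemma real_step:
  assumes okk: "ok a L"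
  shows "map_option (\<lambda>s. (s, L + f s - fhat f a s)) (first_point (\<lambda>t. L + f t - fhat f a t) a \<sigma> x)
     = (if fst (stepT (a, L) x) \<le> \<sigma> then Some (stepT (a, L) x) else None)"
proof -
  have b: "0 \<le> a" "a \<le> \<sigma>" "0 \<le> L" using ok_bounds[OF okk] by auto
  have pt: "L + f y - fhat f a y = lamR a L y" if "y \<in> {a..\<sigma>}" for y
  proof -
    have "y \<in> {0..\<sigma>}" "a \<in> {0..\<sigma>}" using that b by auto
    then show ?thesis by (simp add: lamR_def fR_eq hR_eq)
  qed
  have int: "integral {a..t} (\<lambda>t. L + f t - fhat f a t) = LamR a L t" if "t \<in> {a..\<sigma>}" for t
    unfolding LamR_def by (rule integral_cong) (use that pt in auto)
  have setq: "{t \<in> {a..\<sigma>}. x \<le> integral {a..t} (\<lambda>t. L + f t - fhat f a t)} = {t \<in> {a..\<sigma>}. x \<le> LamR a L t}"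
    using int by auto
  have ex: "(\<exists>t\<in>{a..\<sigma>}. x \<le> integral {a..t} (\<lambda>t. L + f t - fhat f a t)) \<longleftrightarrow> x \<le> LamR a L \<sigma>"
  proof
    assume "\<exists>t\<in>{a..\<sigma>}. x \<le> integral {a..t} (\<lambda>t. L + f t - fhat f a t)"
    then obtain t where t: "t \<in> {a..\<sigma>}" "x \<le> LamR a L t" using int by auto
    then show "x \<le> LamR a L \<sigma>" using LamR_mono[OF b(3), of a t \<sigma>] by auto
  next
    assume "x \<le> LamR a L \<sigma>"
    then show "\<exists>t\<in>{a..\<sigma>}. x \<le> integral {a..t} (\<lambda>t. L + f t - fhat f a t)"
      using int[of \<sigma>] b by (intro bexI[of _ \<sigma>]) auto
  qed
  show ?thesis
  proof (cases "x \<le> LamR a L \<sigma>")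
    case True
    define T where "T = Tm a L x"
    have T: "T \<in> {a..\<sigma>}" using Tm_props(1)[OF okk True] by (simp add: T_def)
    have fp: "first_point (\<lambda>t. L + f t - fhat f a t) a \<sigma> x = Some T"
      unfolding first_point_def using True ex setq by (simp add: T_def Tm_def)
    have st: "stepT (a, L) x = (T, lamR a L T)" using okk True by (simp add: stepT_def T_def)
    show ?thesis using fp st T pt[OF T] by simp
  next
    case False
    have fp: "first_point (\<lambda>t. L + f t - fhat f a t) a \<sigma> x = None"
      unfolding first_point_def using False ex by simp
    have st: "stepT (a, L) x = dead" using False by (simp add: stepT_def)
    show ?thesis using fp st sig by simp
  qed
qed

lemma ok00: "ok (fst (0::real, 0::real)) (snd (0::real, 0::real))" by (simp add: ok_def)

lemma bi_state_cs: "bi_state f \<sigma> (snth s) i = (if fst (cs (0, 0) (stl s) i) \<le> \<sigma> then Some (cs (0, 0) (stl s) i) else None)"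
proof (induction i)
  case 0 then show ?case using sig by simp
next
  case (Suc i)
  show ?case
  proof (cases "fst (cs (0, 0) (stl s) i) \<le> \<sigma>")
    case True
    obtain a L where q: "cs (0, 0) (stl s) i = (a, L)" by (cases "cs (0, 0) (stl s) i")
    have okk: "ok a L" using alive_iff[OF ok00, of "stl s" i] True q by simp
    have "bi_state f \<sigma> (snth s) (Suc i) = map_option (\<lambda>t. (t, L + f t - fhat f a t))
        (first_point (\<lambda>t. L + f t - fhat f a t) a \<sigma> (stl s !! i))"
      using Suc.IH True q by simp
    also have "\<dots> = (if fst (stepT (a, L) (stl s !! i)) \<le> \<sigma> then Some (stepT (a, L) (stl s !! i)) else None)"
      by (rule real_step[OF okk])
    finally show ?thesis using q by simp
  next
    case False
    then have "cs (0, 0) (stl s) i = dead" using cs_inv[OF ok00, of "stl s" i] ok_le by force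
    then have "cs (0, 0) (stl s) (Suc i) = dead" by (simp add: dead_step)
    then show ?thesis using Suc.IH False sig by simp
  qed
qed

lemma least_alive:
  assumes "fst (cs p s n) \<le> \<sigma>" "\<not> fst (cs p s (Suc n)) \<le> \<sigma>" "ok (fst p) (snd p)"
  shows "(LEAST i. \<not> fst (cs p s (Suc i)) \<le> \<sigma>) = n"
proof (rule Least_equality)
  show "\<not> fst (cs p s (Suc n)) \<le> \<sigma>" by fact
  fix y assume y: "\<not> fst (cs p s (Suc y)) \<le> \<sigma>"
  show "n \<le> y"
  proof (rule ccontr)
    assume "\<not> n \<le> y"
    then have "Suc y \<le> n" by simp
    then show False using alive_mono[OF assms(3) _ assms(1)] y by blast
  qed
qed

lemma least_alive2:
  assumes nall: "\<not> (\<forall>i. fst (cs (0, 0) s i) \<le> \<sigma>)" and eq: "(LEAST i. \<not> fst (cs (0, 0) s (Suc i)) \<le> \<sigma>) = n"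
  shows "fst (cs (0, 0) s n) \<le> \<sigma> \<and> \<not> fst (cs (0, 0) s (Suc n)) \<le> \<sigma>"
proof -
  obtain j where j: "\<not> fst (cs (0, 0) s j) \<le> \<sigma>" using nall by blast
  have "j \<noteq> 0" using j sig by (cases j) auto
  then have ex: "\<exists>i. \<not> fst (cs (0, 0) s (Suc i)) \<le> \<sigma>" using j by (intro exI[of _ "j - 1"]) auto
  have a1: "\<not> fst (cs (0, 0) s (Suc n)) \<le> \<sigma>" using LeastI_ex[OF ex] eq by simp
  have a2: "fst (cs (0, 0) s n) \<le> \<sigma>"
  proof (cases n)
    case 0 then show ?thesis using sig by simp
  next
    case (Suc m)
    then have "m < (LEAST i. \<not> fst (cs (0, 0) s (Suc i)) \<le> \<sigma>)" using eq by simp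
    then show ?thesis using not_less_Least Suc by blast
  qed
  show ?thesis using a1 a2 by simp
qed

lemma times_eq:
  assumes "fst (cs (0, 0) (stl s) n) \<le> \<sigma>"
  shows "(\<lambda>i\<in>{1..n}. bi_time f \<sigma> (snth s) i) = (\<lambda>i\<in>{1..n}. fst (cs (0, 0) (stl s) i))"
proof (rule restrict_ext)
  fix i assume "i \<in> {1..n}"
  then have "fst (cs (0, 0) (stl s) i) \<le> \<sigma>" using alive_mono[OF ok00 _ assms] by auto
  then show "bi_time f \<sigma> (snth s) i = fst (cs (0, 0) (stl s) i)" by (simp add: bi_time_def bi_state_cs)
qed

lemma bi_N_eq: "bi_N f \<sigma> (snth s) = (LEAST i. \<not> fst (cs (0, 0) (stl s) (Suc i)) \<le> \<sigma>)"
  unfolding bi_N_def bi_state_cs by simp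

definition Qp :: "nat \<Rightarrow> (nat \<Rightarrow> real) set \<Rightarrow> real stream \<Rightarrow> bool" where
  "Qp n A s' \<longleftrightarrow> (fst (cs (0, 0) s' n) \<le> \<sigma> \<and> \<not> fst (cs (0, 0) s' (Suc n)) \<le> \<sigma> \<and> (\<lambda>i\<in>{1..n}. fst (cs (0, 0) s' i)) \<in> A)
     \<or> (s' \<in> Nd \<and> (LEAST i::nat. False) = n \<and> (\<lambda>i\<in>{1..n}. fst (cs (0, 0) s' i)) \<in> A)"

lemma Q_eq: "(bi_N f \<sigma> (snth s) = n \<and> (\<lambda>i\<in>{1..n}. bi_time f \<sigma> (snth s) i) \<in> A) \<longleftrightarrow> Qp n A (stl s)"
proof (cases "stl s \<in> Nd")
  case True
  then have all: "\<forall>i. fst (cs (0, 0) (stl s) i) \<le> \<sigma>" by (simp add: Nd_def)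
  then have "(\<lambda>i. \<not> fst (cs (0, 0) (stl s) (Suc i)) \<le> \<sigma>) = (\<lambda>i. False)" by (auto simp del: cs.simps)
  then have "bi_N f \<sigma> (snth s) = (LEAST i::nat. False)" by (simp add: bi_N_eq)
  then show ?thesis using True all times_eq[of s n] by (simp add: Qp_def del: cs.simps)
next
  case False
  then have nall: "\<not> (\<forall>i. fst (cs (0, 0) (stl s) i) \<le> \<sigma>)" by (simp add: Nd_def space_S)
  show ?thesis
  proof
    assume h: "bi_N f \<sigma> (snth s) = n \<and> (\<lambda>i\<in>{1..n}. bi_time f \<sigma> (snth s) i) \<in> A"
    then have al: "fst (cs (0, 0) (stl s) n) \<le> \<sigma> \<and> \<not> fst (cs (0, 0) (stl s) (Suc n)) \<le> \<sigma>"
      using least_alive2[OF nall] by (simp add: bi_N_eq)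
    then show "Qp n A (stl s)" using h times_eq[of s n] by (simp add: Qp_def)
  next
    assume "Qp n A (stl s)"
    then have h: "fst (cs (0, 0) (stl s) n) \<le> \<sigma>" "\<not> fst (cs (0, 0) (stl s) (Suc n)) \<le> \<sigma>"
      "(\<lambda>i\<in>{1..n}. fst (cs (0, 0) (stl s) i)) \<in> A" using False by (auto simp: Qp_def)
    have "bi_N f \<sigma> (snth s) = n" using least_alive[OF h(1,2) ok00] by (simp add: bi_N_eq)
    then show "bi_N f \<sigma> (snth s) = n \<and> (\<lambda>i\<in>{1..n}. bi_time f \<sigma> (snth s) i) \<in> A"
      using h times_eq[OF h(1)] by simp
  qed
qed

lemma final:
  fixes M :: "'a measure" and E :: "nat \<Rightarrow> 'a \<Rightarrow> real" and n :: nat and A :: "(nat \<Rightarrow> real) set"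
  assumes PM: "prob_space M"
    and ind: "prob_space.indep_vars M (\<lambda>_. borel) E UNIV"
    and dist: "\<And>i. distributed M lborel (E i) (exponential_density 1)"
    and Am: "A \<in> sets (PiM {1..n} (\<lambda>_. lborel))"
  shows "emeasure M {\<omega>\<in>space M. bi_N f \<sigma> (\<lambda>i. E i \<omega>) = n \<and>
            (\<lambda>i\<in>{1..n}. bi_time f \<sigma> (\<lambda>i. E i \<omega>) i) \<in> A}
         = (\<integral>\<^sup>+ t. indicator (A \<inter> ordered_times \<sigma> n) t * ennreal (bi_density f \<sigma> n t)
              \<partial>(PiM {1..n} (\<lambda>_. lborel)))"
proof -
  interpret P: prob_space M by (rule PM)
  interpret SS: prob_space "stream_space Exp" by (rule prob_S)
  interpret Ex: prob_space Exp by (rule prob_Exp)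
  let ?S = "stream_space Exp"
  define Q0 where "Q0 e \<longleftrightarrow> bi_N f \<sigma> e = n \<and> (\<lambda>i\<in>{1..n}. bi_time f \<sigma> e i) \<in> A" for e
  have [measurable]: "A \<in> sets (PiM {1..n} (\<lambda>_. lborel))" by (rule Am)
  have X1m: "{s' \<in> space ?S. fst (cs (0, 0) s' n) \<le> \<sigma> \<and> \<not> fst (cs (0, 0) s' (Suc n)) \<le> \<sigma> \<and> (\<lambda>i\<in>{1..n}. fst (cs (0, 0) s' i)) \<in> A} \<in> sets ?S"
  proof -
    have [measurable]: "(\<lambda>s. \<lambda>i\<in>{1..n}. fst (cs (0, 0) s i)) \<in> measurable ?S (PiM {1..n} (\<lambda>_. lborel))"
      by (rule measurable_restrict) simp
    show ?thesis by measurable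
  qed
  have X2m: "{s' \<in> space ?S. s' \<in> Nd \<and> (LEAST i::nat. False) = n \<and> (\<lambda>i\<in>{1..n}. fst (cs (0, 0) s' i)) \<in> A} \<in> sets ?S"
  proof -
    have [measurable]: "(\<lambda>s. \<lambda>i\<in>{1..n}. fst (cs (0, 0) s i)) \<in> measurable ?S (PiM {1..n} (\<lambda>_. lborel))"
      by (rule measurable_restrict) simp
    have [measurable]: "Nd \<in> sets ?S" by (rule Nd_sets)
    show ?thesis by measurable
  qed
  define X1 where "X1 = {s' \<in> space ?S. fst (cs (0, 0) s' n) \<le> \<sigma> \<and> \<not> fst (cs (0, 0) s' (Suc n)) \<le> \<sigma> \<and> (\<lambda>i\<in>{1..n}. fst (cs (0, 0) s' i)) \<in> A}"
  define X2 where "X2 = {s' \<in> space ?S. s' \<in> Nd \<and> (LEAST i::nat. False) = n \<and> (\<lambda>i\<in>{1..n}. fst (cs (0, 0) s' i)) \<in> A}"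
  have QpX: "{s' \<in> space ?S. Qp n A s'} = X1 \<union> X2" by (auto simp: Qp_def X1_def X2_def)
  have Qpm: "{s' \<in> space ?S. Qp n A s'} \<in> sets ?S" unfolding QpX X1_def X2_def using X1m X2m by auto
  have X2null: "X2 \<in> null_sets ?S"
    by (rule null_sets_subset[OF Nd_null]) (use X2m in \<open>auto simp: X2_def\<close>)
  define B' where "B' = {s \<in> space ?S. Q0 (snth s)}"
  have Q0Qp: "Q0 (snth s) \<longleftrightarrow> Qp n A (stl s)" for s unfolding Q0_def by (rule Q_eq)
  have B'eq: "B' = {s \<in> space ?S. stl s \<in> {s' \<in> space ?S. Qp n A s'}}"
    by (auto simp: B'_def Q0Qp space_S)
  have B'm: "B' \<in> sets ?S" unfolding B'eq using Qpm by measurable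
  have "emeasure ?S B' = (\<integral>\<^sup>+t. emeasure ?S {x \<in> space ?S. t ## x \<in> B'} \<partial>Exp)"
    by (rule Ex.emeasure_stream_space[OF B'm])
  also have "\<dots> = (\<integral>\<^sup>+t. emeasure ?S {s' \<in> space ?S. Qp n A s'} \<partial>Exp)"
    by (intro nn_integral_cong arg_cong2[where f=emeasure]) (auto simp: B'eq space_S)
  also have "\<dots> = emeasure ?S {s' \<in> space ?S. Qp n A s'}"
    by (simp add: Ex.emeasure_space_1)
  also have "\<dots> = emeasure ?S X1"
    unfolding QpX by (rule emeasure_Un_null_set[OF _ X2null]) (use X1m in \<open>simp add: X1_def\<close>)
  also have "\<dots> = (\<integral>\<^sup>+w. indicator A w * D n 0 (0, 0) w \<partial>PiM {1..n} (\<lambda>_. lborel))"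
  proof -
    have g: "good (fst (0::real, 0::real)) (snd (0::real, 0::real))" using sig by (simp add: good_def ok_def)
    have Am': "A \<in> sets (PiM {Suc 0..0+n} (\<lambda>_. lborel))" using Am by simp
    show ?thesis using main_claim[OF g Am'] by (simp add: X1_def)
  qed
  also have "\<dots> = (\<integral>\<^sup>+ t. indicator (A \<inter> ordered_times \<sigma> n) t * ennreal (bi_density f \<sigma> n t) \<partial>(PiM {1..n} (\<lambda>_. lborel)))"
    by (simp add: density_eq)
  finally have streq: "emeasure ?S B' = (\<integral>\<^sup>+ t. indicator (A \<inter> ordered_times \<sigma> n) t * ennreal (bi_density f \<sigma> n t) \<partial>(PiM {1..n} (\<lambda>_. lborel)))" .
  have snth_to: "snth (to_stream e) = e" for e :: "nat \<Rightarrow> real"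
    by (auto simp: to_stream_def)
  define B where "B = {e \<in> space (PiM UNIV (\<lambda>_::nat. Exp)). Q0 e}"
  have Beq: "B = to_stream -` B' \<inter> space (PiM UNIV (\<lambda>_::nat. Exp))"
    by (auto simp: B_def B'_def snth_to space_S)
  have Bm: "B \<in> sets (PiM UNIV (\<lambda>_::nat. Exp))"
    unfolding Beq by (rule measurable_sets[OF measurable_to_stream B'm])
  have "emeasure (PiM UNIV (\<lambda>_::nat. Exp)) B = emeasure ?S B'"
  proof -
    have "emeasure ?S B' = emeasure (distr (PiM UNIV (\<lambda>_::nat. Exp)) ?S to_stream) B'"
      by (subst stream_space_eq_distr) simp
    also have "\<dots> = emeasure (PiM UNIV (\<lambda>_::nat. Exp)) (to_stream -` B' \<inter> space (PiM UNIV (\<lambda>_::nat. Exp)))"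
      by (rule emeasure_distr[OF measurable_to_stream B'm])
    finally show ?thesis by (simp add: Beq)
  qed
  have rv: "E i \<in> measurable M borel" for i
    using distributed_measurable[OF dist[of i]] by simp
  have dEx: "distr M borel (E i) = Exp" for i
  proof -
    have "distr M borel (E i) = distr M lborel (E i)" by (rule distr_cong) auto
    also have "\<dots> = Exp" using distributed_distr_eq_density[OF dist[of i]] by (simp add: Exp_def)
    finally show ?thesis .
  qed
  have deq: "distr M (PiM UNIV (\<lambda>_. borel)) (\<lambda>x. \<lambda>i\<in>UNIV. E i x) = PiM UNIV (\<lambda>_::nat. Exp)"
    using P.indep_vars_iff_distr_eq_PiM[where I=UNIV and M'="\<lambda>_. borel" and X=E] ind rv by (simp add: dEx)
  have Xm: "(\<lambda>x. \<lambda>i\<in>UNIV. E i x) \<in> measurable M (PiM UNIV (\<lambda>_. borel))"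
    by (rule measurable_restrict) (use rv in simp)
  have sets_eq: "sets (PiM UNIV (\<lambda>_::nat. Exp)) = sets (PiM UNIV (\<lambda>_::nat. borel))"
    by (rule sets_PiM_cong) (auto simp: sets_Exp)
  have Bm': "B \<in> sets (PiM UNIV (\<lambda>_::nat. borel))" using Bm sets_eq by simp
  have "emeasure M {\<omega>\<in>space M. Q0 (\<lambda>i. E i \<omega>)} = emeasure M ((\<lambda>x. \<lambda>i\<in>UNIV. E i x) -` B \<inter> space M)"
    by (intro arg_cong2[where f=emeasure] refl) (auto simp: B_def space_PiM space_Exp restrict_UNIV)
  also have "\<dots> = emeasure (distr M (PiM UNIV (\<lambda>_. borel)) (\<lambda>x. \<lambda>i\<in>UNIV. E i x)) B"
    by (rule emeasure_distr[OF Xm Bm', symmetric])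
  also have "\<dots> = emeasure (PiM UNIV (\<lambda>_::nat. Exp)) B" by (simp add: deq)
  finally have "emeasure M {\<omega>\<in>space M. Q0 (\<lambda>i. E i \<omega>)} = emeasure ?S B'"
    using \<open>emeasure (PiM UNIV (\<lambda>_::nat. Exp)) B = emeasure ?S B'\<close> by simp
  then show ?thesis using streq by (simp add: Q0_def)
qed

end

theorem lemma3p2:
  fixes \<sigma> :: real and f :: "real \<Rightarrow> real" and M :: "'a measure"
    and E :: "nat \<Rightarrow> 'a \<Rightarrow> real" and n :: nat and A :: "(nat \<Rightarrow> real) set"
  assumes "0 < \<sigma>" and "excursion \<sigma> f"
    and "prob_space M"
    and "prob_space.indep_vars M (\<lambda>_. borel) E UNIV"
    and "\<And>i. distributed M lborel (E i) (exponential_density 1)"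
    and "A \<in> sets (PiM {1..n} (\<lambda>_. lborel))"
  shows "emeasure M {\<omega>\<in>space M. bi_N f \<sigma> (\<lambda>i. E i \<omega>) = n \<and>
            (\<lambda>i\<in>{1..n}. bi_time f \<sigma> (\<lambda>i. E i \<omega>) i) \<in> A}
         = (\<integral>\<^sup>+ t. indicator (A \<inter> ordered_times \<sigma> n) t * ennreal (bi_density f \<sigma> n t)
              \<partial>(PiM {1..n} (\<lambda>_. lborel)))"
proof -
  interpret exc \<sigma> f by unfold_locales (rule assms(1), rule assms(2))
  show ?thesis by (rule final[OF assms(3-6)])
qed



end
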